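(* Let $\mathcal{B}=\langle V,F,E\rangle$ be a finite bipartite graph and $W\subseteq V$, and let $\mathrm{CO}(\mathcal{B})=\langle\mathcal{V},\mathcal{E}\rangle$ be its causal ordering graph. Let $S_F\subseteq F$ and $S_V\subseteq V\setminus W$ be such that $S_F\cup S_V\in\mathcal{V}$ and $|S_F|=|S_V|=n$ (so that the intervention below is defined), and fix enumerations $S_F=(f_1,\dots,f_n)$, $S_V=(v_1,\dots,v_n)$. Then $\mathrm{CO}(\mathcal{B}_{\mathrm{do}(S_F,S_V)})=\mathrm{CO}(\mathcal{B})_{\mathrm{do}(S_F,S_V)}$.
   Context: $\mathrm{adj}_{\mathcal{B}}(X)$ = set of neighbours of $X$. $F'\subseteq F$ is self-contained if $|F'|=|\mathrm{adj}(F')|$ and $|F''|\le|\mathrm{adj}(F'')|$ for all $F''\subseteq F'$; minimal self-contained = non-empty self-contained with no non-empty strict self-contained subset. For a maximum matching $M$ of a bipartite graph, an alternating path is a sequence of distinct vertices (possibly one) with consecutive vertices adjacent and edges alternating between not in $M$ and in $M$; the coarse decomposition is $T_I$ = vertices joined by an alternating path to an unmatched variable vertex, $T_O$ = vertices joined by an alternating path to an unmatched constraint vertex, $T_C$ = the rest. Causal ordering graph $\mathrm{CO}(\mathcal{B})=\langle\mathcal{V},\mathcal{E}\rangle$ (a partition of $V\cup F$ into clusters, with edges $x\to C$ from vertices to clusters; $\mathrm{cl}(x)$ is the cluster of $x$): let $\mathcal{B}'$ be the subgraph induced by $(V\setminus W)\cup F$, $\langle T_I,T_C,T_O\rangle$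 its coarse decomposition w.r.t. a maximum matching, and $\mathcal{B}_I,\mathcal{B}_C,\mathcal{B}_O$ the induced subgraphs. On $\mathcal{B}_C$: while the current graph $\mathcal{B}''$ is non-null, choose a minimal self-contained set $S'_F$ of $\mathcal{B}''$, form the cluster $C=S'_F\cup\mathrm{adj}_{\mathcal{B}''}(S'_F)$, add edges $v\to C$ for $v\in\mathrm{adj}_{\mathcal{B}_C}(S'_F)\setminus\mathrm{adj}_{\mathcal{B}''}(S'_F)$, and delete $C$. Other clusters: the vertex sets of connected components of $\mathcal{B}_I$ and of $\mathcal{B}_O$, and $\{w\}$ for $w\in W$. Further edges: $v\to\mathrm{cl}(f)$ for each edge $(v-f)\in E$ with $v\in(T_O\cup T_C)\cap V$ and $f\in T_I\cap F$, or with $v\in T_O\cap V$ and $f\in T_C\cap F$; and $w\to\mathrm{cl}(f)$ for every $w\in W$, $f\in\mathrm{adj}_{\mathcal{B}}(w)$. Perfect intervention on a bipartite graph: $\mathcal{B}_{\mathrm{do}(S_F,S_V)}=\langle V,F,E'\rangle$ where $E'$ consists of the edges of $E$ not incident to any $f_i$ together with the edges $(v_i-f_i)$, $i=1,\dots,n$ (vertex labels unchanged). Perfect intervention on the cluster $S=S_F\cup S_V$ of $\mathrm{CO}(\mathcal{B})$: $\mathrm{CO}(\mathcal{B})_{\mathrm{do}(S_F,S_V)}=\langle\mathcal{V}',\mathcal{E}'\rangle$ with $\mathcal{V}'=(\mathcal{V}\setminus\{S\})\cup\{\{v_i,f_i\}:i=1,\dots,n\}$ and $\mathcal{E}'=\{(x\to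 T)\in\mathcal{E}:T\neq S\}$. *)

theory Defs
  imports Main
begin

definition bip :: "'a set \<Rightarrow> 'a set \<Rightarrow> ('a \<times> 'a) set \<Rightarrow> bool" where
  "bip V F E \<longleftrightarrow> finite V \<and> finite F \<and> V \<inter> F = {} \<and> E \<subseteq> V \<times> F"

definition ein :: "('a \<times> 'a) set \<Rightarrow> 'a \<Rightarrow> 'a \<Rightarrow> bool" where
  "ein E x y \<longleftrightarrow> (x, y) \<in> E \<or> (y, x) \<in> E"

definition adj :: "('a \<times> 'a) set \<Rightarrow> 'a set \<Rightarrow> 'a set" where
  "adj E X = {y. \<exists>x\<in>X. ein E x y}"

definition induced :: "('a \<times> 'a) set \<Rightarrow> 'a set \<Rightarrow> ('a \<times> 'a) set" where
  "induced E U = E \<inter> (U \<times> U)"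

definition self_contained :: "('a \<times> 'a) set \<Rightarrow> 'a set \<Rightarrow> 'a set \<Rightarrow> bool" where
  "self_contained Eg Fg X \<longleftrightarrow> X \<subseteq> Fg \<and> card X = card (adj Eg X) \<and>
     (\<forall>Y. Y \<subseteq> X \<longrightarrow> card Y \<le> card (adj Eg Y))"

definition min_self_contained :: "('a \<times> 'a) set \<Rightarrow> 'a set \<Rightarrow> 'a set \<Rightarrow> bool" where
  "min_self_contained Eg Fg X \<longleftrightarrow> X \<noteq> {} \<and> self_contained Eg Fg X \<and>
     \<not> (\<exists>Y. Y \<subset> X \<and> Y \<noteq> {} \<and> self_contained Eg Fg Y)"

definition matching :: "('a \<times> 'a) set \<Rightarrow> ('a \<times> 'a) set \<Rightarrow> bool" where
  "matching E M \<longleftrightarrow> M \<subseteq> E \<and>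
     (\<forall>e1\<in>M. \<forall>e2\<in>M. (fst e1 = fst e2 \<or> snd e1 = snd e2) \<longrightarrow> e1 = e2)"

definition max_matching :: "('a \<times> 'a) set \<Rightarrow> ('a \<times> 'a) set \<Rightarrow> bool" where
  "max_matching E M \<longleftrightarrow> matching E M \<and> (\<forall>M'. matching E M' \<longrightarrow> card M' \<le> card M)"

definition matched :: "('a \<times> 'a) set \<Rightarrow> 'a \<Rightarrow> bool" where
  "matched M x \<longleftrightarrow> (\<exists>e\<in>M. fst e = x \<or> snd e = x)"

definition alt_path :: "('a \<times> 'a) set \<Rightarrow> ('a \<times> 'a) set \<Rightarrow> 'a list \<Rightarrow> bool" where
  "alt_path E M p \<longleftrightarrow> p \<noteq> [] \<and> distinct p \<and>
     (\<forall>i. Suc i < length p \<longrightarrow> ein E (p ! i) (p ! Suc i)) \<and>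
     (\<forall>i. Suc (Suc i) < length p \<longrightarrow>
        (ein M (p ! i) (p ! Suc i) \<longleftrightarrow> \<not> ein M (p ! Suc i) (p ! Suc (Suc i))))"

definition alt_reach :: "'a set \<Rightarrow> 'a set \<Rightarrow> ('a \<times> 'a) set \<Rightarrow> ('a \<times> 'a) set \<Rightarrow> 'a set \<Rightarrow> 'a set" where
  "alt_reach Vg Fg Eg M U = {x \<in> Vg \<union> Fg. \<exists>u\<in>U. \<not> matched M u \<and>
       (\<exists>p. alt_path Eg M p \<and> hd p = u \<and> last p = x)}"

definition components :: "('a \<times> 'a) set \<Rightarrow> 'a set \<Rightarrow> 'a set set" where
  "components Eg U = {{y \<in> U. (x, y) \<in> (induced Eg U \<union> (induced Eg U)\<inverse>)\<^sup>*} | x. x \<in> U}"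

(* The clustering loop on B_C.  co_core EC Fs U cls eds: starting from the current graph
   B'' induced (in B_C, edges EC) by the remaining vertex set U, the algorithm may produce
   the clusters cls and the edges eds. *)
inductive co_core :: "('a \<times> 'a) set \<Rightarrow> 'a set \<Rightarrow> 'a set \<Rightarrow> 'a set set \<Rightarrow> ('a \<times> 'a set) set \<Rightarrow> bool"
  for EC :: "('a \<times> 'a) set" and Fs :: "'a set" where
  co_nil: "co_core EC Fs {} {} {}"
| co_step: "\<lbrakk> U \<noteq> {};
           min_self_contained (induced EC U) (Fs \<inter> U) S;
           C = S \<union> adj (induced EC U) S;
           co_core EC Fs (U - C) cls eds \<rbrakk>
        \<Longrightarrow> co_core EC Fs U (insert C cls)
              ({(v, C) | v. v \<in> adj EC S - adj (induced EC U) S} \<union> eds)"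

(* is_CO V F E W G: G = (clusters, edges) is a causal ordering graph of B = <V,F,E> with
   exogenous variables W (for some choice of maximum matching and of the minimal
   self-contained sets in the loop). *)
definition is_CO :: "'a set \<Rightarrow> 'a set \<Rightarrow> ('a \<times> 'a) set \<Rightarrow> 'a set \<Rightarrow>
                     'a set set \<times> ('a \<times> 'a set) set \<Rightarrow> bool" where
  "is_CO V F E W G \<longleftrightarrow>
    (let V' = V - W; E' = induced E (V' \<union> F) in
     \<exists>M TI TO TC clsC edsC.
       max_matching E' M \<and>
       TI = alt_reach V' F E' M V' \<and>
       TO = alt_reach V' F E' M F \<and>
       TC = (V' \<union> F) - (TI \<union> TO) \<and>
       co_core (induced E TC) F TC clsC edsC \<and>
       fst G = clsC \<union> components E TI \<union> components E TO \<union> {{w} | w. w \<in> W} \<and>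
       snd G = edsC
         \<union> {(v, C) | v f C. (v, f) \<in> E \<and> C \<in> fst G \<and> f \<in> C \<and>
               ((v \<in> (TO \<union> TC) \<inter> V \<and> f \<in> TI \<inter> F) \<or> (v \<in> TO \<inter> V \<and> f \<in> TC \<inter> F))}
         \<union> {(w, C) | w f C. w \<in> W \<and> f \<in> adj E {w} \<and> C \<in> fst G \<and> f \<in> C})"

definition do_bip :: "('a \<times> 'a) set \<Rightarrow> 'a list \<Rightarrow> 'a list \<Rightarrow> ('a \<times> 'a) set" where
  "do_bip E fs vs = {e \<in> E. snd e \<notin> set fs} \<union> {(vs ! i, fs ! i) | i. i < length fs}"

definition do_CO :: "'a set set \<times> ('a \<times> 'a set) set \<Rightarrow> 'a list \<Rightarrow> 'a list \<Rightarrow>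
                     'a set set \<times> ('a \<times> 'a set) set" where
  "do_CO G fs vs =
     ((fst G - {set fs \<union> set vs}) \<union> {{vs ! i, fs ! i} | i. i < length fs},
      {(x, T) \<in> snd G. T \<noteq> set fs \<union> set vs})"

end

theory Submission
  imports Defs
begin

lemma ein_sym: "ein E x y = ein E y x"
  unfolding ein_def by auto

lemma ein_conv[simp]: "ein (E\<inverse>) x y = ein E x y"
  unfolding ein_def by auto

lemma adj_conv[simp]: "adj (E\<inverse>) X = adj E X"
  unfolding adj_def by simp

lemma matched_alt: "matched M x \<longleftrightarrow> (\<exists>y. (x,y) \<in> M \<or> (y,x) \<in> M)"
  unfolding matched_def by (metis fst_conv snd_conv surjective_pairing)

lemma matched_conv[simp]: "matched (M\<inverse>) x = matched M x"
  unfolding matched_alt by blast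

lemma alt_path_conv[simp]: "alt_path (E\<inverse>) (M\<inverse>) p = alt_path E M p"
  unfolding alt_path_def by simp

lemma card_conv: "card (r\<inverse>) = card r"
proof -
  have "r\<inverse> = (\<lambda>(a,b). (b,a)) ` r" by auto
  moreover have "inj_on (\<lambda>(a,b). (b,a)) r" by (auto simp: inj_on_def)
  ultimately show ?thesis by (simp add: card_image)
qed

lemma matching_alt: "matching E M \<longleftrightarrow> M \<subseteq> E \<and>
   (\<forall>a b c d. (a,b)\<in>M \<longrightarrow> (c,d)\<in>M \<longrightarrow> (a = c \<or> b = d) \<longrightarrow> a = c \<and> b = d)"
  unfolding matching_def Ball_def by auto

lemma matching_conv: "matching (E\<inverse>) (M\<inverse>) = matching E M"
  unfolding matching_alt converse_iff converse_mono by blast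

lemma max_matching_conv: assumes "max_matching E M" shows "max_matching (E\<inverse>) (M\<inverse>)"
  unfolding max_matching_def
proof (intro conjI allI impI)
  show "matching (E\<inverse>) (M\<inverse>)" using assms matching_conv unfolding max_matching_def by blast
  fix N assume "matching (E\<inverse>) N"
  hence "matching E (N\<inverse>)" using matching_conv[of E "N\<inverse>"] by simp
  hence "card (N\<inverse>) \<le> card M" using assms unfolding max_matching_def by blast
  thus "card N \<le> card (M\<inverse>)" by (simp add: card_conv)
qed

lemma alt_reach_conv: "alt_reach P Q Eg M U = alt_reach Q P (Eg\<inverse>) (M\<inverse>) U"
  unfolding alt_reach_def by auto

lemma ein_induced: "ein (induced E U) x y \<longleftrightarrow> ein E x y \<and> x \<in> U \<and> y \<in> U"
  unfolding ein_def induced_def by auto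

lemma adj_induced: "adj (induced E U) X = {y \<in> U. \<exists>x\<in>X \<inter> U. ein E x y}"
  unfolding adj_def ein_induced by auto

lemma adj_Un: "adj E (X \<union> Y) = adj E X \<union> adj E Y"
  unfolding adj_def by auto

lemma adj_mono: "X \<subseteq> Y \<Longrightarrow> adj E X \<subseteq> adj E Y"
  unfolding adj_def by auto

lemma adj_empty[simp]: "adj E {} = {}"
  unfolding adj_def by auto

lemma induced_induced: "induced (induced E A) B = induced E (A \<inter> B)"
  unfolding induced_def by auto

lemma alt_path_take:
  assumes "alt_path E M p" "0 < k" "k \<le> length p"
  shows "alt_path E M (take k p)"
  unfolding alt_path_def
proof (intro conjI allI impI)
  show "take k p \<noteq> []" using assms unfolding alt_path_def by simp
  show "distinct (take k p)" using assms unfolding alt_path_def by simp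
next
  fix i assume "Suc i < length (take k p)"
  thus "ein E (take k p ! i) (take k p ! Suc i)" using assms(1) unfolding alt_path_def by simp
next
  fix i assume "Suc (Suc i) < length (take k p)"
  thus "ein M (take k p ! i) (take k p ! Suc i) = (\<not> ein M (take k p ! Suc i) (take k p ! Suc (Suc i)))"
    using assms(1) unfolding alt_path_def by simp
qed

lemma alt_path_snoc:
  assumes "alt_path E M p" "y \<notin> set p" "ein E (last p) y"
    "2 \<le> length p \<Longrightarrow> (ein M (p ! (length p - 2)) (last p) \<longleftrightarrow> \<not> ein M (last p) y)"
  shows "alt_path E M (p @ [y])"
proof -
  have ne: "p \<noteq> []" using assms(1) unfolding alt_path_def by blast
  have lp: "last p = p ! (length p - 1)" using ne by (simp add: last_conv_nth)
  show ?thesis unfolding alt_path_def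
  proof (intro conjI allI impI)
    show "p @ [y] \<noteq> []" by simp
    have "distinct p" using assms(1) unfolding alt_path_def by blast
    thus "distinct (p @ [y])" using assms(2) by simp
  next
    fix i assume i: "Suc i < length (p @ [y])"
    show "ein E ((p @ [y]) ! i) ((p @ [y]) ! Suc i)"
    proof (cases "Suc i < length p")
      case True
      have "ein E (p!i) (p!Suc i)" using assms(1) True unfolding alt_path_def by blast
      thus ?thesis using True by (simp add: nth_append)
    next
      case False
      hence "Suc i = length p" using i by simp
      hence "i = length p - 1" by simp
      thus ?thesis using assms(3) lp \<open>Suc i = length p\<close> by (simp add: nth_append)
    qed
  next
    fix i assume i: "Suc (Suc i) < length (p @ [y])"
    show "ein M ((p @ [y]) ! i) ((p @ [y]) ! Suc i) = (\<not> ein M ((p @ [y]) ! Suc i) ((p @ [y]) ! Suc (Suc i)))"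
    proof (cases "Suc (Suc i) < length p")
      case True
      have "ein M (p ! i) (p ! Suc i) = (\<not> ein M (p ! Suc i) (p ! Suc (Suc i)))"
        using assms(1) True unfolding alt_path_def by blast
      thus ?thesis using True by (simp add: nth_append)
    next
      case False
      hence e: "Suc (Suc i) = length p" using i by simp
      hence "2 \<le> length p" by simp
      hence *: "ein M (p ! (length p - 2)) (last p) \<longleftrightarrow> \<not> ein M (last p) y" using assms(4) by blast
      have a: "(p @ [y]) ! i = p ! (length p - 2)"
      proof -
        have "i < length p" "length p - 2 = i" using e by auto
        thus ?thesis by (simp add: nth_append)
      qed
      have b: "(p @ [y]) ! Suc i = last p"
      proof -
        have "Suc i < length p" "length p - Suc 0 = Suc i" using e by auto
        thus ?thesis using lp by (simp add: nth_append)
      qed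
      have c: "(p @ [y]) ! Suc (Suc i) = y" using e by (simp add: nth_append)
      show ?thesis unfolding a b c using * .
    qed
  qed
qed

lemma alt_path_single: "alt_path E M [x]"
  unfolding alt_path_def by simp

lemma last_take_Suc: "j < length p \<Longrightarrow> last (take (Suc j) p) = p ! j"
  by (simp add: take_Suc_conv_app_nth)

lemma hd_take_Suc: "p \<noteq> [] \<Longrightarrow> hd (take (Suc j) p) = hd p"
  by (cases p) auto

lemma ein_matched: "ein N a b \<Longrightarrow> matched N a"
  unfolding ein_def matched_alt by blast

lemma alt_path_drop2:
  assumes "alt_path E N (a # b # q)" "q \<noteq> []"
    "\<forall>x\<in>set q. \<forall>y\<in>set q. ein N2 x y = ein N x y"
  shows "alt_path E N2 q"
  unfolding alt_path_def
proof (intro conjI allI impI)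
  show "q \<noteq> []" by fact
  show "distinct q" using assms(1) unfolding alt_path_def by simp
next
  fix i assume i: "Suc i < length q"
  have h: "\<forall>j. Suc j < length (a#b#q) \<longrightarrow> ein E ((a#b#q)!j) ((a#b#q)!Suc j)"
    using assms(1) unfolding alt_path_def by blast
  have "ein E ((a # b # q) ! Suc (Suc i)) ((a # b # q) ! Suc (Suc (Suc i)))"
    using h[rule_format, of "Suc (Suc i)"] i by simp
  thus "ein E (q ! i) (q ! Suc i)" by simp
next
  fix i assume i: "Suc (Suc i) < length q"
  have "ein N ((a # b # q) ! Suc (Suc i)) ((a # b # q) ! Suc (Suc (Suc i))) =
     (\<not> ein N ((a # b # q) ! Suc (Suc (Suc i))) ((a # b # q) ! Suc (Suc (Suc (Suc i)))))"
    using assms(1) i unfolding alt_path_def by (metis Suc_less_eq length_Cons)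
  hence "ein N (q ! i) (q ! Suc i) = (\<not> ein N (q ! Suc i) (q ! Suc (Suc i)))" by simp
  moreover have "q ! i \<in> set q" "q ! Suc i \<in> set q" "q ! Suc (Suc i) \<in> set q" using i by auto
  ultimately show "ein N2 (q ! i) (q ! Suc i) = (\<not> ein N2 (q ! Suc i) (q ! Suc (Suc i)))"
    using assms(3) by simp
qed

locale bipg =
  fixes P Q :: "'a set" and Eg M :: "('a \<times> 'a) set"
  assumes finP: "finite P" and finQ: "finite Q" and PQ: "P \<inter> Q = {}"
    and EgPQ: "Eg \<subseteq> P \<times> Q" and mm: "max_matching Eg M"
begin

definition "R = alt_reach P Q Eg M P"
definition "X = R \<inter> P"

lemma Mm: "matching Eg M" using mm unfolding max_matching_def by blast
lemma MEg: "M \<subseteq> Eg" using Mm unfolding matching_def by blast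
lemma finEg: "finite Eg" using EgPQ finP finQ by (meson finite_SigmaI finite_subset)
lemma finM: "finite M" using MEg finEg finite_subset by blast

lemma mfst: "matching Eg N \<Longrightarrow> (a,b)\<in>N \<Longrightarrow> (a,c)\<in>N \<Longrightarrow> b = c"
  unfolding matching_alt by blast
lemma msnd: "matching Eg N \<Longrightarrow> (a,b)\<in>N \<Longrightarrow> (c,b)\<in>N \<Longrightarrow> a = c"
  unfolding matching_alt by blast
lemma mPQ: "matching Eg N \<Longrightarrow> (a,b)\<in>N \<Longrightarrow> a \<in> P \<and> b \<in> Q"
  unfolding matching_def using EgPQ by blast

lemma einE: "ein Eg a b \<Longrightarrow> (a\<in>P \<and> b\<in>Q \<and> (a,b)\<in>Eg) \<or> (a\<in>Q \<and> b\<in>P \<and> (b,a)\<in>Eg)"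
  unfolding ein_def using EgPQ by blast

lemma einNP: "matching Eg N \<Longrightarrow> ein N a b \<Longrightarrow> a \<in> P \<Longrightarrow> (a,b) \<in> N"
  unfolding ein_def using mPQ PQ by blast
lemma einNQ: "matching Eg N \<Longrightarrow> ein N a b \<Longrightarrow> a \<in> Q \<Longrightarrow> (b,a) \<in> N"
  unfolding ein_def using mPQ PQ by blast

lemma matchedQ: "matching Eg N \<Longrightarrow> a \<in> Q \<Longrightarrow> matched N a \<longleftrightarrow> (\<exists>b. (b,a)\<in>N)"
  unfolding matched_alt using mPQ PQ by blast
lemma matchedP: "matching Eg N \<Longrightarrow> a \<in> P \<Longrightarrow> matched N a \<longleftrightarrow> (\<exists>b. (a,b)\<in>N)"
  unfolding matched_alt using mPQ PQ by blast

lemma par: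
  assumes "alt_path Eg N p" "hd p \<in> P"
  shows "i < length p \<Longrightarrow> (even i \<longrightarrow> p!i \<in> P) \<and> (odd i \<longrightarrow> p!i \<in> Q)"
proof (induction i)
  case 0
  have "p \<noteq> []" using assms(1) unfolding alt_path_def by blast
  thus ?case using assms(2) by (simp add: hd_conv_nth)
next
  case (Suc i)
  have e: "ein Eg (p!i) (p!Suc i)" using assms(1) Suc.prems unfolding alt_path_def by blast
  have "(even i \<longrightarrow> p!i \<in> P) \<and> (odd i \<longrightarrow> p!i \<in> Q)" using Suc by simp
  thus ?case using einE[OF e] PQ by auto
qed

lemma medge:
  assumes "alt_path Eg N p" "\<not> matched N (hd p)"
  shows "Suc i < length p \<Longrightarrow> ein N (p!i) (p!Suc i) \<longleftrightarrow> odd i"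
proof (induction i)
  case 0
  have "p \<noteq> []" using assms(1) unfolding alt_path_def by blast
  hence "hd p = p!0" by (simp add: hd_conv_nth)
  thus ?case using assms(2) ein_matched by fastforce
next
  case (Suc i)
  have "ein N (p!i) (p!Suc i) = (\<not> ein N (p!Suc i) (p!Suc (Suc i)))"
    using assms(1) Suc.prems unfolding alt_path_def by blast
  thus ?case using Suc by simp
qed

lemma aug:
  "alt_path Eg N p \<Longrightarrow> matching Eg N \<Longrightarrow> hd p \<in> P \<Longrightarrow> \<not> matched N (hd p) \<Longrightarrow>
   \<not> matched N (last p) \<Longrightarrow> 2 \<le> length p \<Longrightarrow> \<exists>N'. matching Eg N' \<and> card N' = Suc (card N)"
proof (induction "length p" arbitrary: p N rule: less_induct)
  case less
  obtain a b q where p: "p = a # b # q" using less.prems(6)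
    by (metis One_nat_def Suc_1 Suc_le_length_iff)
  have finN: "finite N" using less.prems(2) finEg finite_subset unfolding matching_def by blast
  have h0: "\<forall>i. Suc i < length p \<longrightarrow> ein Eg (p!i) (p!Suc i)"
    using less.prems(1) unfolding alt_path_def by blast
  have ab: "ein Eg a b" using h0[rule_format, of 0] p by simp
  have aP: "a \<in> P" using less.prems(3) p by simp
  hence bQ: "b \<in> Q" and abE: "(a,b) \<in> Eg" using einE[OF ab] PQ by auto
  have aun: "\<not> matched N a" using less.prems(4) p by simp
  have nab: "(a,b) \<notin> N" using aun unfolding matched_alt by blast
  show ?case
  proof (cases q)
    case Nil
    have bun: "\<not> matched N b" using less.prems(5) p Nil by simp
    have "matching Eg (insert (a,b) N)"
      using less.prems(2) abE aun bun unfolding matching_alt matched_alt by blast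
    moreover have "card (insert (a,b) N) = Suc (card N)" using nab finN by simp
    ultimately show ?thesis by blast
  next
    case (Cons c q')
    have dist: "distinct p" using less.prems(1) unfolding alt_path_def by blast
    have h: "\<forall>i. Suc (Suc i) < length p \<longrightarrow> (ein N (p!i) (p!Suc i) \<longleftrightarrow> \<not>ein N (p!Suc i) (p!Suc(Suc i)))"
      using less.prems(1) unfolding alt_path_def by blast
    have alt0: "ein N a b = (\<not> ein N b c)"
      using h[rule_format, of 0] p Cons by simp
    have "\<not> ein N a b" using aun ein_matched[of N a b] by blast
    hence bc: "ein N b c" using alt0 by blast
    hence cb: "(c,b) \<in> N" using einNQ[OF less.prems(2) _ bQ] by blast
    hence cP: "c \<in> P" using mPQ[OF less.prems(2)] by blast
    have q'ne: "q' \<noteq> []"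
    proof
      assume "q' = []"
      hence "last p = c" using p Cons by simp
      thus False using less.prems(5) cb unfolding matched_alt by blast
    qed
    define N2 where "N2 = insert (a,b) (N - {(c,b)})"
    have abq: "a \<notin> set q" "b \<notin> set q" "a \<noteq> b" using dist p by auto
    have eq: "\<forall>x\<in>set q. \<forall>y\<in>set q. ein N2 x y = ein N x y"
    proof (intro ballI)
      fix x y assume "x \<in> set q" "y \<in> set q"
      hence "x \<noteq> a" "x \<noteq> b" "y \<noteq> a" "y \<noteq> b" using abq by auto
      thus "ein N2 x y = ein N x y" unfolding N2_def ein_def by auto
    qed
    have ap2: "alt_path Eg N2 q" using alt_path_drop2[OF less.prems(1)[unfolded p] _ eq] Cons by simp
    have mN2: "matching Eg N2"
    proof -
      have "N2 \<subseteq> Eg" using less.prems(2) abE unfolding N2_def matching_def by blast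
      moreover have "\<forall>x y z w. (x,y)\<in>N2 \<longrightarrow> (z,w)\<in>N2 \<longrightarrow> (x = z \<or> y = w) \<longrightarrow> x = z \<and> y = w"
      proof (intro allI impI)
        fix x y z w assume h: "(x,y)\<in>N2" "(z,w)\<in>N2" "x = z \<or> y = w"
        have m: "\<And>x y z w. (x,y)\<in>N \<Longrightarrow> (z,w)\<in>N \<Longrightarrow> (x = z \<or> y = w) \<Longrightarrow> x = z \<and> y = w"
          using less.prems(2) unfolding matching_alt by blast
        have "\<And>z w. (z,w) \<in> N - {(c,b)} \<Longrightarrow> z \<noteq> a \<and> w \<noteq> b"
        proof -
          fix z w assume zw: "(z,w) \<in> N - {(c,b)}"
          have "z \<noteq> a" using zw aun unfolding matched_alt by blast
          moreover have "w \<noteq> b" using zw cb m by blast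
          ultimately show "z \<noteq> a \<and> w \<noteq> b" by blast
        qed
        thus "x = z \<and> y = w" using h m unfolding N2_def by blast
      qed
      ultimately show ?thesis unfolding matching_alt by blast
    qed
    have cardN2: "card N2 = card N"
    proof -
      have "card (N - {(c,b)}) = card N - 1" using cb finN by simp
      moreover have "(a,b) \<notin> N - {(c,b)}" using nab by blast
      moreover have "card N \<ge> 1" using cb finN by (metis One_nat_def Suc_leI card_gt_0_iff empty_iff)
      ultimately show ?thesis unfolding N2_def using finN by simp
    qed
    have hdq: "hd q = c" using Cons by simp
    have cun: "\<not> matched N2 c"
    proof
      assume "matched N2 c"
      then obtain d where "(c,d) \<in> N2 \<or> (d,c) \<in> N2" unfolding matched_alt by blast
      moreover have "c \<noteq> a" "c \<noteq> b" using abq Cons by auto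
      ultimately have "(c,d) \<in> N - {(c,b)} \<or> (d,c) \<in> N" unfolding N2_def by auto
      thus False using cb mfst[OF less.prems(2)] mPQ[OF less.prems(2)] cP PQ by blast
    qed
    have lastq: "last q = last p" using p Cons q'ne by simp
    have lun: "\<not> matched N2 (last q)"
    proof
      assume "matched N2 (last q)"
      then obtain d where d: "(last q,d) \<in> N2 \<or> (d,last q) \<in> N2" unfolding matched_alt by blast
      have "last q \<in> set q" using Cons by simp
      hence "last q \<noteq> a" "last q \<noteq> b" using abq by auto
      hence "(last q,d) \<in> N \<or> (d,last q) \<in> N" using d unfolding N2_def by auto
      thus False using less.prems(5) lastq unfolding matched_alt by auto
    qed
    have lenq: "length q < length p" "2 \<le> length q" using p Cons q'ne by (cases q'; simp)+
    obtain N' where "matching Eg N'" "card N' = Suc (card N2)"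
      using less.hyps[OF lenq(1) ap2 mN2 _ _ lun lenq(2)] hdq cP cun by auto
    thus ?thesis using cardN2 by auto
  qed
qed

end

context bipg begin

lemma R_mem: "x \<in> R \<longleftrightarrow> x \<in> P \<union> Q \<and> (\<exists>u\<in>P. \<not> matched M u \<and> (\<exists>p. alt_path Eg M p \<and> hd p = u \<and> last p = x))"
  unfolding R_def alt_reach_def by auto

lemma R_PQ: "R \<subseteq> P \<union> Q" using R_mem by blast

lemma ap_ne: "alt_path E N p \<Longrightarrow> p \<noteq> []" unfolding alt_path_def by blast

lemma path_R:
  assumes "alt_path Eg M p" "hd p \<in> P" "\<not> matched M (hd p)" "j < length p"
  shows "p ! j \<in> R"
proof -
  have ne: "p \<noteq> []" using ap_ne assms(1) by blast
  have "alt_path Eg M (take (Suc j) p)" using alt_path_take[OF assms(1)] assms(4) by simp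
  moreover have "hd (take (Suc j) p) = hd p" using hd_take_Suc ne by blast
  moreover have "last (take (Suc j) p) = p ! j" using last_take_Suc assms(4) by blast
  moreover have "p ! j \<in> P \<union> Q" using par[OF assms(1,2) assms(4)] by auto
  ultimately show ?thesis unfolding R_mem using assms(2,3) by blast
qed

lemma unm_X: assumes "u \<in> P" "\<not> matched M u" shows "u \<in> X"
proof -
  have "alt_path Eg M [u] \<and> hd [u] = u \<and> last [u] = u" using alt_path_single by simp
  hence "u \<in> R" unfolding R_mem using assms by blast
  thus ?thesis using assms unfolding X_def by blast
qed

lemma getpath:
  assumes "x \<in> R"
  obtains p where "alt_path Eg M p" "hd p \<in> P" "\<not> matched M (hd p)" "last p = x"
    "p ! (length p - 1) = x" "length p - 1 < length p"
proof -
  obtain u p where "u \<in> P" "\<not> matched M u" "alt_path Eg M p" "hd p = u" "last p = x"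
    using assms unfolding R_mem by blast
  moreover have "p \<noteq> []" using ap_ne calculation(3) by blast
  ultimately show ?thesis using that by (simp add: last_conv_nth)
qed

lemma X_adj_R:
  assumes "x \<in> X" "ein Eg x y"
  shows "y \<in> R"
proof -
  have xR: "x \<in> R" and xP: "x \<in> P" using assms(1) unfolding X_def by auto
  obtain p where p: "alt_path Eg M p" "hd p \<in> P" "\<not> matched M (hd p)" "last p = x"
    "p ! (length p - 1) = x" "length p - 1 < length p" using getpath[OF xR] by blast
  define k where "k = length p - 1"
  have ev: "even k" using par[OF p(1,2) p(6)] xP PQ p(5) unfolding k_def by auto
  have yQ: "y \<in> Q" using einE[OF assms(2)] xP PQ by auto
  show ?thesis
  proof (cases "y \<in> set p")
    case True
    then obtain j where "j < length p" "p ! j = y" by (auto simp: in_set_conv_nth)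
    thus ?thesis using path_R[OF p(1,2,3)] by blast
  next
    case False
    have cond: "ein M (p ! (length p - 2)) (last p) \<longleftrightarrow> \<not> ein M (last p) y" if "2 \<le> length p"
    proof -
      have k2: "k \<ge> 2" using ev that unfolding k_def by presburger
      have s1: "Suc (k - 1) = k" using k2 by simp
      have s2: "k < length p" using p(6) unfolding k_def .
      have o: "odd (k - 1)" using ev k2 by (metis even_Suc s1)
      have "ein M (p ! (k - 1)) (p ! Suc (k - 1)) \<longleftrightarrow> odd (k - 1)"
        using medge[OF p(1,3), of "k - 1"] s1 s2 by simp
      hence e1: "ein M (p ! (k - 1)) (p ! k)" using o s1 by simp
      have "\<not> ein M x y"
      proof
        assume "ein M x y"
        hence "(x,y) \<in> M" using einNP[OF Mm] xP by blast
        moreover have "(x, p ! (k - 1)) \<in> M" using e1 p(5) einNP[OF Mm] xP ein_sym unfolding k_def by metis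
        ultimately have "y = p ! (k - 1)" using mfst[OF Mm] by blast
        moreover have "k - 1 < length p" unfolding k_def using p(6) by auto
        ultimately show False using False by auto
      qed
      moreover have "length p - 2 = k - 1" unfolding k_def by simp
      ultimately show ?thesis using e1 p(4,5) unfolding k_def by auto
    qed
    have "alt_path Eg M (p @ [y])" using alt_path_snoc[OF p(1) False] assms(2) p(4) cond by blast
    moreover have "hd (p @ [y]) = hd p" using ap_ne[OF p(1)] by simp
    ultimately show ?thesis unfolding R_mem using yQ p(2,3) by force
  qed
qed

lemma RQ_partner:
  assumes "y \<in> R" "y \<in> Q"
  shows "\<exists>x\<in>X. (x,y) \<in> M"
proof -
  obtain p where p: "alt_path Eg M p" "hd p \<in> P" "\<not> matched M (hd p)" "last p = y"
    "p ! (length p - 1) = y" "length p - 1 < length p" using getpath[OF assms(1)] by blast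
  define k where "k = length p - 1"
  have od: "odd k" using par[OF p(1,2) p(6)] assms(2) PQ p(5) unfolding k_def by auto
  hence len2: "2 \<le> length p" using p(6) unfolding k_def by presburger
  have "matched M y"
  proof (rule ccontr)
    assume "\<not> matched M y"
    then obtain N' where "matching Eg N'" "card N' = Suc (card M)"
      using aug[OF p(1) Mm p(2,3)] p(4) len2 by auto
    thus False using mm unfolding max_matching_def by fastforce
  qed
  then obtain x where xy: "(x,y) \<in> M" using matchedQ[OF Mm assms(2)] by blast
  have xP: "x \<in> P" using mPQ[OF Mm xy] by blast
  have "x \<in> R"
  proof (cases "x \<in> set p")
    case True
    then obtain j where "j < length p" "p ! j = x" by (auto simp: in_set_conv_nth)
    thus ?thesis using path_R[OF p(1,2,3)] by blast
  next
    case False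
    have cond: "ein M (p ! (length p - 2)) (last p) \<longleftrightarrow> \<not> ein M (last p) x"
    proof -
      have "k > 0" using od by (rule odd_pos)
      hence s1: "Suc (k - 1) = k" by simp
      have s2: "k < length p" using p(6) unfolding k_def .
      have o: "even (k - 1)" using od s1 by (metis even_Suc)
      have "ein M (p ! (k - 1)) (p ! Suc (k - 1)) \<longleftrightarrow> odd (k - 1)"
        using medge[OF p(1,3), of "k - 1"] s1 s2 by simp
      hence e1: "\<not> ein M (p ! (k - 1)) (p ! k)" using o s1 by simp
      moreover have "ein M y x" using xy unfolding ein_def by blast
      moreover have "length p - 2 = k - 1" unfolding k_def by simp
      ultimately show ?thesis using p(4,5) unfolding k_def by auto
    qed
    have "ein Eg (last p) x" using xy MEg p(4) unfolding ein_def by blast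
    hence "alt_path Eg M (p @ [x])" using alt_path_snoc[OF p(1) False] cond by blast
    moreover have "hd (p @ [x]) = hd p" using ap_ne[OF p(1)] by simp
    ultimately show ?thesis unfolding R_mem using xP p(2,3) by force
  qed
  thus ?thesis using xy xP unfolding X_def by blast
qed

lemma RQ_adj:
  assumes "y \<in> R" "y \<in> Q"
  shows "y \<in> adj Eg X"
proof -
  obtain p where p: "alt_path Eg M p" "hd p \<in> P" "\<not> matched M (hd p)" "last p = y"
    "p ! (length p - 1) = y" "length p - 1 < length p" using getpath[OF assms(1)] by blast
  define k where "k = length p - 1"
  have od: "odd k" using par[OF p(1,2) p(6)] assms(2) PQ p(5) unfolding k_def by auto
  have k0: "k > 0" using od by (rule odd_pos)
  have k1: "k - 1 < length p" "Suc (k - 1) = k" using k0 p(6) unfolding k_def by auto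
  have "p ! (k - 1) \<in> R" using path_R[OF p(1,2,3) k1(1)] .
  moreover have "p ! (k - 1) \<in> P" using par[OF p(1,2) k1(1)] od k1(2) by (metis even_Suc)
  moreover have "ein Eg (p ! (k - 1)) (p ! k)" using p(1) k1 p(6) unfolding alt_path_def k_def
    by (metis (no_types, lifting))
  ultimately show ?thesis unfolding adj_def X_def using p(5) unfolding k_def by blast
qed

lemma X_P: "X \<subseteq> P" unfolding X_def by blast
lemma adjX_Q: "adj Eg X \<subseteq> Q" using X_P einE PQ unfolding adj_def by blast
lemma R_eq: "R = X \<union> adj Eg X"
proof
  show "R \<subseteq> X \<union> adj Eg X" using R_PQ RQ_adj unfolding X_def by blast
  show "X \<union> adj Eg X \<subseteq> R" using X_adj_R unfolding X_def adj_def by blast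
qed
lemma adjX_partner: "y \<in> adj Eg X \<Longrightarrow> \<exists>x\<in>X. (x,y) \<in> M"
  using RQ_partner R_eq adjX_Q by blast

end

context bipg begin

lemma adjP_Q: "Z \<subseteq> P \<Longrightarrow> adj Eg Z \<subseteq> Q"
  using einE PQ unfolding adj_def by blast

lemma fin_adj: "Z \<subseteq> P \<Longrightarrow> finite (adj Eg Z)"
  using adjP_Q finQ finite_subset by blast

lemma cardDiff: assumes "Z \<subseteq> P" shows "card (P - Z) + card Z = card P"
proof -
  have "card Z \<le> card P" using card_mono[OF finP assms] .
  moreover have "card (P - Z) = card P - card Z"
    using card_Diff_subset[OF finite_subset[OF assms finP] assms] .
  ultimately show ?thesis by simp
qed

lemma decomp:
  assumes "matching Eg N" "Z \<subseteq> P"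
  shows "card N = card (snd ` {e\<in>N. fst e \<in> Z}) + card (fst ` {e\<in>N. fst e \<notin> Z})"
    and "snd ` {e\<in>N. fst e \<in> Z} \<subseteq> adj Eg Z" and "fst ` {e\<in>N. fst e \<notin> Z} \<subseteq> P - Z"
proof -
  have finN: "finite N" using assms(1) finEg finite_subset unfolding matching_def by blast
  have i1: "inj_on snd {e\<in>N. fst e \<in> Z}" using assms(1) unfolding matching_def inj_on_def by blast
  have i2: "inj_on fst {e\<in>N. fst e \<notin> Z}" using assms(1) unfolding matching_def inj_on_def by blast
  have "N = {e\<in>N. fst e \<in> Z} \<union> {e\<in>N. fst e \<notin> Z}" by blast
  hence "card N = card {e\<in>N. fst e \<in> Z} + card {e\<in>N. fst e \<notin> Z}"
    using finN card_Un_disjoint[of "{e\<in>N. fst e \<in> Z}" "{e\<in>N. fst e \<notin> Z}"] by auto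
  thus "card N = card (snd ` {e\<in>N. fst e \<in> Z}) + card (fst ` {e\<in>N. fst e \<notin> Z})"
    using card_image[OF i1] card_image[OF i2] by simp
  show "snd ` {e\<in>N. fst e \<in> Z} \<subseteq> adj Eg Z"
  proof
    fix y assume "y \<in> snd ` {e\<in>N. fst e \<in> Z}"
    then obtain a where "(a,y) \<in> N" "a \<in> Z" by force
    hence "(a,y) \<in> Eg" "a \<in> Z" using assms(1) unfolding matching_def by auto
    thus "y \<in> adj Eg Z" unfolding adj_def ein_def by blast
  qed
  show "fst ` {e\<in>N. fst e \<notin> Z} \<subseteq> P - Z"
    using mPQ[OF assms(1)] by force
qed

lemma weak:
  assumes "matching Eg N" "Z \<subseteq> P"
  shows "card N + card Z \<le> card (adj Eg Z) + card P"
proof -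
  note d = decomp[OF assms]
  have "card (snd ` {e\<in>N. fst e \<in> Z}) \<le> card (adj Eg Z)" by (rule card_mono[OF fin_adj[OF assms(2)] d(2)])
  moreover have "card (fst ` {e\<in>N. fst e \<notin> Z}) \<le> card (P - Z)" by (rule card_mono[OF _ d(3)]) (use finP in blast)
  moreover have "card (P - Z) + card Z = card P" using cardDiff[OF assms(2)] .
  ultimately show ?thesis using d(1) by linarith
qed

lemma T4: "card M + card X = card (adj Eg X) + card P"
proof -
  note d = decomp[OF Mm X_P]
  have "snd ` {e\<in>M. fst e \<in> X} = adj Eg X"
  proof
    show "adj Eg X \<subseteq> snd ` {e\<in>M. fst e \<in> X}"
    proof
      fix y assume "y \<in> adj Eg X"
      then obtain x where "x \<in> X" "(x,y) \<in> M" using adjX_partner by blast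
      thus "y \<in> snd ` {e\<in>M. fst e \<in> X}" by force
    qed
  qed (rule d(2))
  moreover have "fst ` {e\<in>M. fst e \<notin> X} = P - X"
  proof
    show "P - X \<subseteq> fst ` {e\<in>M. fst e \<notin> X}"
    proof
      fix z assume z: "z \<in> P - X"
      hence "matched M z" using unm_X by blast
      then obtain b where "(z,b) \<in> M" using matchedP[OF Mm] z by blast
      thus "z \<in> fst ` {e\<in>M. fst e \<notin> X}" using z by force
    qed
  qed (rule d(3))
  moreover have "card (P - X) + card X = card P" using cardDiff[OF X_P] .
  ultimately show ?thesis using d(1) by simp
qed

lemma T5:
  assumes "Z \<subseteq> P" "card M + card Z = card (adj Eg Z) + card P"
  shows "X \<subseteq> Z"
proof -
  note d = decomp[OF Mm assms(1)]
  have c1: "card (snd ` {e\<in>M. fst e \<in> Z}) \<le> card (adj Eg Z)" by (rule card_mono[OF fin_adj[OF assms(1)] d(2)])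
  have c2: "card (fst ` {e\<in>M. fst e \<notin> Z}) \<le> card (P - Z)" by (rule card_mono[OF _ d(3)]) (use finP in blast)
  have c3: "card (P - Z) + card Z = card P" using cardDiff[OF assms(1)] .
  have e1: "snd ` {e\<in>M. fst e \<in> Z} = adj Eg Z"
    using card_subset_eq[OF fin_adj[OF assms(1)] d(2)] c1 c2 c3 d(1) assms(2) by linarith
  have "card (fst ` {e\<in>M. fst e \<notin> Z}) = card (P - Z)" using c1 c2 c3 d(1) assms(2) by linarith
  hence e2: "fst ` {e\<in>M. fst e \<notin> Z} = P - Z"
    using card_subset_eq[OF _ d(3)] finP by blast
  have allm: "\<forall>z\<in>P - Z. \<exists>b. (z,b) \<in> M" using e2 by force
  have part: "\<forall>y\<in>adj Eg Z. \<exists>z\<in>Z. (z,y) \<in> M" using e1 by force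
  show "X \<subseteq> Z"
  proof
    fix x assume "x \<in> X"
    hence xR: "x \<in> R" and xP: "x \<in> P" unfolding X_def by auto
    obtain p where p: "alt_path Eg M p" "hd p \<in> P" "\<not> matched M (hd p)" "last p = x"
      "p ! (length p - 1) = x" "length p - 1 < length p" using getpath[OF xR] by blast
    have ne: "p \<noteq> []" using ap_ne[OF p(1)] .
    have claim: "i < length p \<Longrightarrow> (even i \<longrightarrow> p!i \<in> Z) \<and> (odd i \<longrightarrow> p!i \<in> adj Eg Z)" for i
    proof (induction i)
      case 0
      have "hd p = p ! 0" using ne by (simp add: hd_conv_nth)
      moreover have "hd p \<in> Z" using p(2,3) allm matchedP[OF Mm] by blast
      ultimately show ?case by simp
    next
      case (Suc i)
      have ed: "ein Eg (p!i) (p!Suc i)" using p(1) Suc.prems unfolding alt_path_def by blast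
      have IH: "(even i \<longrightarrow> p!i \<in> Z) \<and> (odd i \<longrightarrow> p!i \<in> adj Eg Z)" using Suc by simp
      show ?case
      proof (cases "even i")
        case True
        hence "p ! Suc i \<in> adj Eg Z" using IH ed unfolding adj_def by blast
        thus ?thesis using True by simp
      next
        case False
        hence "p!i \<in> adj Eg Z" using IH by simp
        then obtain z where z: "z \<in> Z" "(z, p!i) \<in> M" using part by blast
        have "ein M (p!i) (p!Suc i)" using medge[OF p(1,3) Suc.prems] False by simp
        moreover have "p!i \<in> Q" using par[OF p(1,2)] False Suc.prems by simp
        ultimately have "(p!Suc i, p!i) \<in> M" using einNQ[OF Mm] by blast
        hence "p!Suc i = z" using msnd[OF Mm] z by blast
        thus ?thesis using z False by simp
      qed
    qed
    have "even (length p - 1)" using par[OF p(1,2) p(6)] xP PQ p(5) by auto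
    thus "x \<in> Z" using claim[OF p(6)] p(5) by simp
  qed
qed

lemma comps:
  assumes EE: "\<forall>a b. ein Eg a b \<longrightarrow> ein E a b" and K: "K \<in> components E R"
  shows "card (K \<inter> Q) < card (K \<inter> P)"
proof (rule ccontr)
  assume A: "\<not> card (K \<inter> Q) < card (K \<inter> P)"
  obtain x0 where x0: "x0 \<in> R" and Kdef: "K = {y \<in> R. (x0, y) \<in> (induced E R \<union> (induced E R)\<inverse>)\<^sup>*}"
    using K unfolding components_def by blast
  have clos: "z \<in> K" if "y \<in> K" "z \<in> R" "ein Eg y z" for y z
  proof -
    have "ein E y z" using EE that(3) by blast
    hence "(y,z) \<in> induced E R \<union> (induced E R)\<inverse>" using that Kdef unfolding ein_def induced_def by auto
    thus ?thesis using that Kdef by (auto intro: rtrancl_into_rtrancl)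
  qed
  have KR: "K \<subseteq> R" using Kdef by blast
  have x0K: "x0 \<in> K" using Kdef x0 by blast
  define Z where "Z = X - K"
  have ZP: "Z \<subseteq> P" using X_P unfolding Z_def by blast
  have adjZ: "adj Eg Z = adj Eg X - K"
  proof
    show "adj Eg Z \<subseteq> adj Eg X - K"
    proof
      fix y assume "y \<in> adj Eg Z"
      then obtain z where z: "z \<in> Z" "ein Eg z y" unfolding adj_def by blast
      have "y \<in> adj Eg X" using z unfolding Z_def adj_def by blast
      moreover have "y \<notin> K"
      proof
        assume "y \<in> K"
        moreover have "z \<in> R" using z(1) R_eq unfolding Z_def by blast
        ultimately have "z \<in> K" using clos z(2) ein_sym by metis
        thus False using z(1) unfolding Z_def by blast
      qed
      ultimately show "y \<in> adj Eg X - K" by blast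
    qed
    show "adj Eg X - K \<subseteq> adj Eg Z"
    proof
      fix y assume y: "y \<in> adj Eg X - K"
      then obtain z where z: "z \<in> X" "ein Eg z y" unfolding adj_def by blast
      have "z \<notin> K"
      proof
        assume "z \<in> K"
        moreover have "y \<in> R" using y R_eq by blast
        ultimately show False using clos z(2) y by blast
      qed
      thus "y \<in> adj Eg Z" using z unfolding Z_def adj_def by blast
    qed
  qed
  have KP: "K \<inter> P \<subseteq> X" using KR R_eq adjX_Q PQ by blast
  have KQ: "K \<inter> Q \<subseteq> adj Eg X" using KR R_eq X_P PQ by blast
  have finX: "finite X" using X_P finP finite_subset by blast
  have cX: "card X = card Z + card (K \<inter> P)"
  proof -
    have "X = Z \<union> (K \<inter> P)" "Z \<inter> (K \<inter> P) = {}" using KP X_P unfolding Z_def by auto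
    thus ?thesis using finX card_Un_disjoint by (metis finite_Un)
  qed
  have cA: "card (adj Eg X) = card (adj Eg Z) + card (K \<inter> Q)"
  proof -
    have "adj Eg X = adj Eg Z \<union> (K \<inter> Q)" "adj Eg Z \<inter> (K \<inter> Q) = {}" using KQ adjZ adjX_Q by auto
    thus ?thesis using fin_adj[OF X_P] card_Un_disjoint by (metis finite_Un)
  qed
  have "card M + card Z \<le> card (adj Eg Z) + card P" using weak[OF Mm ZP] .
  hence "card M + card Z = card (adj Eg Z) + card P" using T4 cX cA A by linarith
  hence "X \<subseteq> Z" using T5[OF ZP] by blast
  hence XK: "X \<inter> K = {}" unfolding Z_def by blast
  have "K \<inter> Q = {}"
  proof (rule ccontr)
    assume "K \<inter> Q \<noteq> {}"
    then obtain y where "y \<in> K" "y \<in> adj Eg X" using KQ by blast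
    then obtain z where "z \<in> X" "ein Eg z y" unfolding adj_def by blast
    moreover have "z \<in> R" using calculation(1) R_eq by blast
    ultimately have "z \<in> K" using clos \<open>y \<in> K\<close> ein_sym by metis
    thus False using XK \<open>z \<in> X\<close> by blast
  qed
  moreover have "K \<inter> P = {}" using XK KP by blast
  ultimately have "K = {}" using KR R_PQ by blast
  thus False using x0K by blast
qed

end

lemma sc_cong:
  assumes "\<forall>Y\<subseteq>Fg. adj E1 Y = adj E2 Y"
  shows "self_contained E1 Fg X = self_contained E2 Fg X"
  using assms unfolding self_contained_def by (metis order_trans)

lemma msc_cong:
  assumes "\<forall>Y\<subseteq>Fg. adj E1 Y = adj E2 Y"
  shows "min_self_contained E1 Fg X = min_self_contained E2 Fg X"
  unfolding min_self_contained_def using sc_cong[OF assms] by simp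

lemma co_transfer:
  "co_core EC Fs U cls eds \<Longrightarrow> (\<forall>x\<in>Fs \<inter> U. \<forall>y. ein EC x y = ein EC' x y) \<Longrightarrow> co_core EC' Fs U cls eds"
proof (induction rule: co_core.induct)
  case co_nil
  show ?case by (rule co_core.co_nil)
next
  case (co_step U S C cls eds)
  have adjeq: "\<forall>Y\<subseteq>Fs \<inter> U. adj (induced EC U) Y = adj (induced EC' U) Y"
    using co_step.prems unfolding adj_induced by blast
  have m: "min_self_contained (induced EC' U) (Fs \<inter> U) S"
    using co_step.hyps(2) msc_cong[OF adjeq] by simp
  have S: "S \<subseteq> Fs \<inter> U" using co_step.hyps(2) unfolding min_self_contained_def self_contained_def by blast
  have a1: "adj (induced EC U) S = adj (induced EC' U) S" using adjeq S by blast
  have a2: "adj EC S = adj EC' S" using co_step.prems S unfolding adj_def by blast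
  have "co_core EC' Fs (U - C) cls eds" using co_step.IH co_step.prems by blast
  from co_core.co_step[OF co_step.hyps(1) m _ this] co_step.hyps(3)
  show ?case unfolding a1 a2 by simp
qed

locale cob =
  fixes EC :: "('a \<times> 'a) set" and Fs Vx :: "'a set"
  assumes ECsub: "EC \<subseteq> Vx \<times> Fs" and VF: "Vx \<inter> Fs = {}"
begin

abbreviation "A U X \<equiv> adj (induced EC U) X"
abbreviation "msc U S \<equiv> min_self_contained (induced EC U) (Fs \<inter> U) S"
abbreviation "sc U S \<equiv> self_contained (induced EC U) (Fs \<inter> U) S"
definition "Hall U \<longleftrightarrow> (\<forall>Y\<subseteq>Fs \<inter> U. card Y \<le> card (A U Y))"

lemma A_sub: "X \<subseteq> Fs \<Longrightarrow> A U X \<subseteq> U \<inter> Vx"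
  unfolding adj_induced ein_def using ECsub VF by blast

lemma A_diff: "X \<inter> D = {} \<Longrightarrow> A (U - D) X = A U X - D"
  unfolding adj_induced by blast

lemma A_mono: "X \<subseteq> Y \<Longrightarrow> A U X \<subseteq> A U Y" by (rule adj_mono)

lemma mscD:
  assumes "msc U S"
  shows "S \<noteq> {}" "S \<subseteq> Fs \<inter> U" "card S = card (A U S)" "\<forall>Y\<subseteq>S. card Y \<le> card (A U Y)"
    "\<And>Y. Y \<subset> S \<Longrightarrow> Y \<noteq> {} \<Longrightarrow> \<not> sc U Y"
  using assms unfolding min_self_contained_def self_contained_def by blast+

lemma msc_remove:
  assumes "msc U S" "D \<inter> (S \<union> A U S) = {}"
  shows "msc (U - D) S" "A (U - D) S = A U S"
proof -
  have Yeq: "A (U - D) Y = A U Y" if "Y \<subseteq> S" for Y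
  proof -
    have "Y \<inter> D = {}" using that assms(2) by blast
    hence "A (U - D) Y = A U Y - D" by (rule A_diff)
    moreover have "A U Y \<subseteq> A U S" using A_mono[OF that] .
    ultimately show ?thesis using assms(2) by blast
  qed
  thus "A (U - D) S = A U S" by blast
  have sceq: "sc (U - D) Y = sc U Y" if "Y \<subseteq> S" for Y
  proof -
    have "Y \<subseteq> Fs \<inter> (U - D) \<longleftrightarrow> Y \<subseteq> Fs \<inter> U" using that assms(2) by blast
    moreover have "\<forall>Z\<subseteq>Y. A (U - D) Z = A U Z" using Yeq that by blast
    ultimately show ?thesis unfolding self_contained_def by (metis Yeq that)
  qed
  show "msc (U - D) S"
    using assms(1) sceq unfolding min_self_contained_def by (meson order.refl psubset_imp_subset)
qed

lemma msc_disj: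
  assumes "finite U" "Hall U" "msc U S" "msc U S'" "S \<noteq> S'"
  shows "S \<inter> S' = {}" "A U S \<inter> A U S' = {}"
proof -
  note m1 = mscD[OF assms(3)] and m2 = mscD[OF assms(4)]
  define I where "I = S \<inter> S'"
  define J where "J = S \<union> S'"
  have finS: "finite S" "finite S'" using m1(2) m2(2) assms(1) finite_subset by blast+
  have finA: "finite (A U Z)" for Z using A_sub assms(1) unfolding adj_induced by auto
  have AJ: "A U J = A U S \<union> A U S'" unfolding J_def by (rule adj_Un)
  have AI: "A U I \<subseteq> A U S \<inter> A U S'" unfolding I_def using A_mono by blast
  have c1: "card (A U S) + card (A U S') = card (A U J) + card (A U S \<inter> A U S')"
    unfolding AJ using card_Un_Int finA by blast
  have c2: "card S + card S' = card J + card I" unfolding I_def J_def using card_Un_Int finS by blast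
  have h1: "card I \<le> card (A U I)" using m1(4) unfolding I_def by blast
  have JF: "J \<subseteq> Fs \<inter> U" unfolding J_def using m1(2) m2(2) by blast
  have h2: "card J \<le> card (A U J)" using assms(2) JF unfolding Hall_def by blast
  have h3: "card (A U I) \<le> card (A U S \<inter> A U S')" by (rule card_mono[OF _ AI]) (use finA in blast)
  have eqI: "card I = card (A U I)" and eqInt: "card (A U S \<inter> A U S') = card (A U I)"
    using c1 c2 h1 h2 h3 m1(3) m2(3) by linarith+
  have "I = {}"
  proof (rule ccontr)
    assume ne: "I \<noteq> {}"
    have scI: "sc U I" unfolding self_contained_def
      using eqI m1(2) m1(4) unfolding I_def by (meson inf.cobounded1 order_trans)
    have "I = S" using m1(5)[of I] ne scI unfolding I_def by blast
    moreover have "I = S'" using m2(5)[of I] ne scI unfolding I_def by blast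
    ultimately show False using assms(5) by blast
  qed
  thus "S \<inter> S' = {}" unfolding I_def .
  have "card (A U S \<inter> A U S') = 0" using eqInt \<open>I = {}\<close> by simp
  thus "A U S \<inter> A U S' = {}" using finA by simp
qed

lemma Hall_pres:
  assumes "finite U" "Hall U" "S \<subseteq> Fs \<inter> U" "card S = card (A U S)"
  shows "Hall (U - (S \<union> A U S))"
  unfolding Hall_def
proof (intro allI impI)
  fix Y assume Y: "Y \<subseteq> Fs \<inter> (U - (S \<union> A U S))"
  have finA: "finite (A U Z)" for Z using assms(1) unfolding adj_induced by auto
  have finY: "finite Y" "finite S" using Y assms(1,3) finite_subset by blast+
  have "Y \<inter> (S \<union> A U S) = {}" using Y by blast
  hence "A (U - (S \<union> A U S)) Y = A U Y - (S \<union> A U S)" by (rule A_diff)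
  also have "\<dots> = A U Y - A U S"
  proof -
    have "Y \<subseteq> Fs" using Y by blast
    hence "A U Y \<subseteq> Vx" using A_sub by blast
    thus ?thesis using assms(3) VF by blast
  qed
  finally have e: "A (U - (S \<union> A U S)) Y = A U Y - A U S" .
  have u: "A U (Y \<union> S) = (A U Y - A U S) \<union> A U S" unfolding adj_Un by blast
  have "card (A U (Y \<union> S)) = card (A U Y - A U S) + card (A U S)"
    unfolding u by (rule card_Un_disjoint) (use finA in auto)
  moreover have "card (Y \<union> S) = card Y + card S"
    by (rule card_Un_disjoint) (use finY Y in auto)
  moreover have "Y \<union> S \<subseteq> Fs \<inter> U" using Y assms(3) by blast
  hence "card (Y \<union> S) \<le> card (A U (Y \<union> S))" using assms(2) unfolding Hall_def by blast
  ultimately show "card Y \<le> card (A (U - (S \<union> A U S)) Y)" unfolding e using assms(4) by linarith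
qed

lemma co_clusters:
  "co_core EC Fs U cls eds \<Longrightarrow> (\<forall>T\<in>cls. T \<noteq> {} \<and> T \<subseteq> U) \<and> (\<forall>x\<in>eds. snd x \<in> cls) \<and>
     (\<forall>T1\<in>cls. \<forall>T2\<in>cls. T1 \<inter> T2 \<noteq> {} \<longrightarrow> T1 = T2)"
proof (induction rule: co_core.induct)
  case co_nil
  then show ?case by simp
next
  case (co_step U S C cls eds)
  have "S \<noteq> {}" "S \<subseteq> Fs \<inter> U" using mscD[OF co_step.hyps(2)] by auto
  moreover have "A U S \<subseteq> U" using A_sub[of S U] calculation(2) by blast
  ultimately have "C \<noteq> {}" "C \<subseteq> U" using co_step.hyps(3) by auto
  thus ?case using co_step.IH by auto
qed

lemma co_swap:
  "co_core EC Fs U cls eds \<Longrightarrow> finite U \<Longrightarrow> Hall U \<Longrightarrow> msc U S' \<Longrightarrow>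
   \<exists>cls2 eds2. co_core EC Fs (U - (S' \<union> A U S')) cls2 eds2 \<and> cls = insert (S' \<union> A U S') cls2 \<and>
      eds = {(v, S' \<union> A U S') | v. v \<in> adj EC S' - A U S'} \<union> eds2"
proof (induction arbitrary: S' rule: co_core.induct)
  case co_nil
  then show ?case using mscD(1,2)[OF co_nil.prems(3)] by blast
next
  case (co_step U S C cls eds)
  show ?case
  proof (cases "S = S'")
    case True
    thus ?thesis using co_step.hyps by blast
  next
    case False
    note d = msc_disj[OF co_step.prems(1,2) co_step.hyps(2) co_step.prems(3) False]
    note m1 = mscD[OF co_step.hyps(2)] and m2 = mscD[OF co_step.prems(3)]
    define C' where "C' = S' \<union> A U S'"
    have AS: "A U S \<subseteq> Vx" "A U S' \<subseteq> Vx" using A_sub m1(2) m2(2) by blast+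
    have dC: "C \<inter> (S' \<union> A U S') = {}" using co_step.hyps(3) d AS m1(2) m2(2) VF by blast
    have dC': "C' \<inter> (S \<union> A U S) = {}" unfolding C'_def using d AS m1(2) m2(2) VF by blast
    note r1 = msc_remove[OF co_step.prems(3) dC]
    note r2 = msc_remove[OF co_step.hyps(2) dC']
    have finU': "finite (U - C)" using co_step.prems(1) by blast
    have HU': "Hall (U - C)" using Hall_pres[OF co_step.prems(1,2) m1(2,3)] co_step.hyps(3) by simp
    obtain cls3 eds3 where IH: "co_core EC Fs (U - C - (S' \<union> A (U - C) S')) cls3 eds3"
      "cls = insert (S' \<union> A (U - C) S') cls3"
      "eds = {(v, S' \<union> A (U - C) S') |v. v \<in> adj EC S' - A (U - C) S'} \<union> eds3"
      using co_step.IH[OF finU' HU' r1(1)] by blast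
    have C'eq: "S' \<union> A (U - C) S' = C'" using r1(2) unfolding C'_def by simp
    have Ceq: "S \<union> A (U - C') S = C" using r2(2) co_step.hyps(3) by simp
    have "U - C' - C = U - C - C'" by blast
    hence "co_core EC Fs (U - C' - C) cls3 eds3" using IH(1) C'eq by simp
    hence "co_core EC Fs (U - C' - (S \<union> A (U - C') S)) cls3 eds3" using Ceq by simp
    moreover have ne: "U - C' \<noteq> {}" using m1(1,2) dC' by blast
    ultimately have st: "co_core EC Fs (U - C') (insert (S \<union> A (U - C') S) cls3)
        ({(v, S \<union> A (U - C') S) |v. v \<in> adj EC S - A (U - C') S} \<union> eds3)"
      using co_core.co_step[OF _ r2(1) refl] by blast
    show ?thesis
      apply (rule exI[of _ "insert C cls3"])
      apply (rule exI[of _ "{(v, C) |v. v \<in> adj EC S - A U S} \<union> eds3"])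
      using st IH(2,3) C'eq Ceq r1(2) r2(2) co_step.hyps(3) unfolding C'_def by auto
  qed
qed

lemma co_uniq:
  "co_core EC Fs U c1 e1 \<Longrightarrow> finite U \<Longrightarrow> Hall U \<Longrightarrow> co_core EC Fs U c2 e2 \<Longrightarrow> c1 = c2 \<and> e1 = e2"
proof (induction arbitrary: c2 e2 rule: co_core.induct)
  case co_nil
  thus ?case using co_core.cases by blast
next
  case (co_step U S C cls eds)
  note m1 = mscD[OF co_step.hyps(2)]
  obtain cls2 eds2 where s: "co_core EC Fs (U - C) cls2 eds2" "c2 = insert C cls2"
     "e2 = {(v, C) |v. v \<in> adj EC S - A U S} \<union> eds2"
    using co_swap[OF co_step.prems(3,1,2) co_step.hyps(2)] co_step.hyps(3) by blast
  have HU': "Hall (U - C)" using Hall_pres[OF co_step.prems(1,2) m1(2,3)] co_step.hyps(3) by simp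
  have "cls = cls2 \<and> eds = eds2" using co_step.IH[OF _ HU' s(1)] co_step.prems(1) by blast
  thus ?case using s by simp
qed

lemma co_remove:
  "co_core EC Fs U cls eds \<Longrightarrow> C0 \<in> cls \<Longrightarrow>
   co_core EC Fs (U - C0) (cls - {C0}) {x \<in> eds. snd x \<noteq> C0}"
proof (induction rule: co_core.induct)
  case co_nil
  thus ?case by simp
next
  case (co_step U S C cls eds)
  note cl = co_clusters[OF co_step.hyps(4)]
  have Cne: "C \<noteq> {}" using mscD(1)[OF co_step.hyps(2)] co_step.hyps(3) by blast
  show ?case
  proof (cases "C0 = C")
    case True
    have "C \<notin> cls" using cl Cne by blast
    hence "insert C cls - {C0} = cls" using True by simp
    moreover have "{x \<in> {(v, C) |v. v \<in> adj EC S - A U S} \<union> eds. snd x \<noteq> C0} = eds"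
      using True cl \<open>C \<notin> cls\<close> by auto
    ultimately show ?thesis using co_step.hyps(4) True by simp
  next
    case False
    hence C0in: "C0 \<in> cls" using co_step.prems by blast
    have sub: "C0 \<subseteq> U - C" using cl C0in by blast
    have dC: "C0 \<inter> (S \<union> A U S) = {}" using sub co_step.hyps(3) by blast
    note r = msc_remove[OF co_step.hyps(2) dC]
    have IH: "co_core EC Fs (U - C - C0) (cls - {C0}) {x \<in> eds. snd x \<noteq> C0}" using co_step.IH C0in .
    have "U - C - C0 = U - C0 - (S \<union> A (U - C0) S)" using r(2) co_step.hyps(3) by blast
    hence IH': "co_core EC Fs (U - C0 - (S \<union> A (U - C0) S)) (cls - {C0}) {x \<in> eds. snd x \<noteq> C0}"
      using IH by simp
    have ne: "U - C0 \<noteq> {}" using mscD(1,2)[OF co_step.hyps(2)] dC by blast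
    from co_core.co_step[OF ne r(1) refl IH']
    have st: "co_core EC Fs (U - C0) (insert C (cls - {C0}))
       ({(v, C) |v. v \<in> adj EC S - A U S} \<union> {x \<in> eds. snd x \<noteq> C0})"
      using r(2) co_step.hyps(3) by simp
    have "insert C (cls - {C0}) = insert C cls - {C0}" using False by blast
    moreover have "{(v, C) |v. v \<in> adj EC S - A U S} \<union> {x \<in> eds. snd x \<noteq> C0} =
       {x \<in> {(v, C) |v. v \<in> adj EC S - A U S} \<union> eds. snd x \<noteq> C0}" using False by auto
    ultimately show ?thesis using st by simp
  qed
qed

lemma co_pm:
  "co_core EC Fs U cls eds \<Longrightarrow> finite U \<Longrightarrow> (\<forall>x y z. ein M x y \<longrightarrow> ein M x z \<longrightarrow> y = z) \<Longrightarrow>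
   (\<forall>x y. ein M x y \<longrightarrow> x \<in> U \<longrightarrow> y \<in> U \<longrightarrow> ein EC x y) \<Longrightarrow> (\<forall>x\<in>U. \<exists>y\<in>U. ein M x y) \<Longrightarrow>
   \<forall>T\<in>cls. \<forall>x\<in>T. \<exists>y\<in>T. ein M x y"
proof (induction rule: co_core.induct)
  case co_nil
  thus ?case by simp
next
  case (co_step U S C cls eds)
  note m = mscD[OF co_step.hyps(2)]
  define g where "g = (\<lambda>f. SOME y. y \<in> U \<and> ein M f y)"
  have g: "g f \<in> U \<and> ein M f (g f)" if "f \<in> U" for f
  proof -
    have "\<exists>y. y \<in> U \<and> ein M f y" using co_step.prems(4) that by blast
    thus ?thesis unfolding g_def by (rule someI_ex)
  qed
  have gA: "g ` S \<subseteq> A U S"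
  proof
    fix y assume "y \<in> g ` S"
    then obtain f where f: "f \<in> S" "y = g f" by blast
    hence "f \<in> U" using m(2) by blast
    hence "ein EC f y" "y \<in> U" using g co_step.prems(3) f by blast+
    thus "y \<in> A U S" unfolding adj_induced using f \<open>f \<in> U\<close> by blast
  qed
  have ginj: "inj_on g S"
  proof (rule inj_onI)
    fix f1 f2 assume "f1 \<in> S" "f2 \<in> S" "g f1 = g f2"
    moreover have "f1 \<in> U" "f2 \<in> U" using calculation m(2) by blast+
    ultimately have "ein M (g f1) f1" "ein M (g f1) f2" using g ein_sym by metis+
    thus "f1 = f2" using co_step.prems(2) by blast
  qed
  have finS: "finite S" using m(2) co_step.prems(1) finite_subset by blast
  have finA: "finite (A U S)" using co_step.prems(1) unfolding adj_induced by auto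
  have gS: "g ` S = A U S"
    using card_subset_eq[OF finA gA] card_image[OF ginj] m(3) by simp
  have pC: "\<forall>x\<in>C. \<exists>y\<in>C. ein M x y"
  proof
    fix x assume "x \<in> C"
    hence "x \<in> S \<or> x \<in> A U S" using co_step.hyps(3) by blast
    thus "\<exists>y\<in>C. ein M x y"
    proof
      assume "x \<in> S" thus ?thesis using g gS co_step.hyps(3) m(2) by blast
    next
      assume "x \<in> A U S"
      then obtain f where "f \<in> S" "x = g f" using gS by force
      thus ?thesis using g ein_sym co_step.hyps(3) m(2) by (metis Int_iff UnI1 subsetD)
    qed
  qed
  have pU: "\<forall>x\<in>U - C. \<exists>y\<in>U - C. ein M x y"
  proof
    fix x assume x: "x \<in> U - C"
    then obtain y where y: "y \<in> U" "ein M x y" using co_step.prems(4) by blast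
    have "y \<notin> C"
    proof
      assume "y \<in> C"
      then obtain z where "z \<in> C" "ein M y z" using pC by blast
      moreover have "ein M y x" using y ein_sym by metis
      ultimately have "z = x" using co_step.prems(2) by blast
      thus False using x \<open>z \<in> C\<close> by blast
    qed
    thus "\<exists>y\<in>U - C. ein M x y" using y by blast
  qed
  have "\<forall>T\<in>cls. \<forall>x\<in>T. \<exists>y\<in>T. ein M x y"
    using co_step.IH co_step.prems pU by blast
  thus ?case using pC by blast
qed

lemma Hall_pm:
  assumes "finite U" "\<forall>x y z. ein M x y \<longrightarrow> ein M x z \<longrightarrow> y = z"
    "\<forall>x y. ein M x y \<longrightarrow> x \<in> U \<longrightarrow> y \<in> U \<longrightarrow> ein EC x y" "\<forall>x\<in>U. \<exists>y\<in>U. ein M x y"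
  shows "Hall U"
  unfolding Hall_def
proof (intro allI impI)
  fix Y assume Y: "Y \<subseteq> Fs \<inter> U"
  define g where "g = (\<lambda>f. SOME y. y \<in> U \<and> ein M f y)"
  have g: "g f \<in> U \<and> ein M f (g f)" if "f \<in> U" for f
  proof -
    have "\<exists>y. y \<in> U \<and> ein M f y" using assms(4) that by blast
    thus ?thesis unfolding g_def by (rule someI_ex)
  qed
  have gA: "g ` Y \<subseteq> A U Y"
  proof
    fix y assume "y \<in> g ` Y"
    then obtain f where f: "f \<in> Y" "y = g f" by blast
    hence "f \<in> U" using Y by blast
    hence "ein EC f y" "y \<in> U" using g assms(3) f by blast+
    thus "y \<in> A U Y" unfolding adj_induced using f \<open>f \<in> U\<close> by blast
  qed
  have ginj: "inj_on g Y"
  proof (rule inj_onI)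
    fix f1 f2 assume "f1 \<in> Y" "f2 \<in> Y" "g f1 = g f2"
    moreover have "f1 \<in> U" "f2 \<in> U" using calculation Y by blast+
    ultimately have "ein M (g f1) f1" "ein M (g f1) f2" using g ein_sym by metis+
    thus "f1 = f2" using assms(2) by blast
  qed
  have finA: "finite (A U Y)" using assms(1) unfolding adj_induced by auto
  show "card Y \<le> card (A U Y)"
    using card_mono[OF finA gA] card_image[OF ginj] by simp
qed

end

lemma bipD: assumes "bip V F E" shows "finite V" "finite F" "V \<inter> F = {}" "E \<subseteq> V \<times> F"
  using assms unfolding bip_def by auto

lemma E1_sub: "bip V F E \<Longrightarrow> induced E ((V - W) \<union> F) \<subseteq> (V - W) \<times> F"
  unfolding bip_def induced_def by blast

lemma bipg_I: "bip V F E \<Longrightarrow> max_matching (induced E ((V - W) \<union> F)) M \<Longrightarrow>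
  bipg (V - W) F (induced E ((V - W) \<union> F)) M"
  unfolding bipg_def using E1_sub[of V F E W] bipD[of V F E] by blast

lemma bipg_O: "bip V F E \<Longrightarrow> max_matching (induced E ((V - W) \<union> F)) M \<Longrightarrow>
  bipg F (V - W) ((induced E ((V - W) \<union> F))\<inverse>) (M\<inverse>)"
  unfolding bipg_def using E1_sub[of V F E W] bipD[of V F E] max_matching_conv by blast

lemma partner_unique:
  assumes "matching Eg M" "Eg \<subseteq> P \<times> Q" "P \<inter> Q = {}"
  shows "\<forall>x y z. ein M x y \<longrightarrow> ein M x z \<longrightarrow> y = z"
  using assms unfolding matching_alt ein_def by blast

lemma PM_TC:
  assumes bip: "bip V F E" and mm: "max_matching (induced E ((V - W) \<union> F)) M"
  defines "E1 \<equiv> induced E ((V - W) \<union> F)"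
  defines "TC \<equiv> ((V - W) \<union> F) - (alt_reach (V - W) F E1 M (V - W) \<union> alt_reach (V - W) F E1 M F)"
  shows "\<forall>x\<in>TC. \<exists>y\<in>TC. ein M x y"
proof
  interpret I: bipg "V - W" F E1 M using bipg_I[OF bip mm] unfolding E1_def .
  interpret O: bipg F "V - W" "E1\<inverse>" "M\<inverse>" using bipg_O[OF bip mm] unfolding E1_def .
  have TI: "alt_reach (V - W) F E1 M (V - W) = I.X \<union> adj E1 I.X" using I.R_eq unfolding I.R_def .
  have TO: "alt_reach (V - W) F E1 M F = O.X \<union> adj E1 O.X"
    using O.R_eq unfolding O.R_def alt_reach_conv[of "V - W" F E1 M F] by simp
  have IXP: "I.X \<subseteq> V - W" "adj E1 I.X \<subseteq> F" using I.X_P I.adjX_Q by auto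
  have OXP: "O.X \<subseteq> F" "adj E1 O.X \<subseteq> V - W" using O.X_P O.adjX_Q by auto
  have VF: "(V - W) \<inter> F = {}" using bipD[OF bip] by blast
  fix x assume x: "x \<in> TC"
  hence xn: "x \<notin> I.X" "x \<notin> adj E1 I.X" "x \<notin> O.X" "x \<notin> adj E1 O.X" "x \<in> (V - W) \<union> F"
    unfolding TC_def TI TO by auto
  show "\<exists>y\<in>TC. ein M x y"
  proof (cases "x \<in> V - W")
    case True
    have "matched M x" using I.unm_X True xn(1) by blast
    then obtain f where f: "(x,f) \<in> M" using I.matchedP[OF I.Mm True] by blast
    have fF: "f \<in> F" using I.mPQ[OF I.Mm f] by blast
    have "f \<notin> adj E1 I.X"
    proof
      assume "f \<in> adj E1 I.X"
      then obtain x' where "x' \<in> I.X" "(x',f) \<in> M" using I.adjX_partner by blast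
      thus False using I.msnd[OF I.Mm f] xn(1) by blast
    qed
    moreover have "f \<notin> O.X"
    proof
      assume "f \<in> O.X"
      moreover have "ein E1 f x" using f I.MEg unfolding ein_def by blast
      ultimately have "x \<in> adj E1 O.X" unfolding adj_def by blast
      thus False using xn by blast
    qed
    ultimately have "f \<in> TC" unfolding TC_def TI TO using IXP OXP fF VF by blast
    thus ?thesis using f unfolding ein_def by blast
  next
    case False
    hence xF: "x \<in> F" using xn(5) by blast
    have "matched (M\<inverse>) x" using O.unm_X xF xn(3) by blast
    then obtain v where v: "(x,v) \<in> M\<inverse>" using O.matchedP[OF O.Mm xF] by blast
    have vV: "v \<in> V - W" using O.mPQ[OF O.Mm v] by blast
    have "v \<notin> adj E1 O.X"
    proof
      assume "v \<in> adj E1 O.X"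
      then obtain x' where "x' \<in> O.X" "(x',v) \<in> M\<inverse>" using O.adjX_partner by auto
      thus False using O.msnd[OF O.Mm v] xn(3) by blast
    qed
    moreover have "v \<notin> I.X"
    proof
      assume "v \<in> I.X"
      moreover have "ein E1 v x" using v I.MEg unfolding ein_def by blast
      ultimately have "x \<in> adj E1 I.X" unfolding adj_def by blast
      thus False using xn by blast
    qed
    ultimately have "v \<in> TC" unfolding TC_def TI TO using IXP OXP vV VF by blast
    thus ?thesis using v unfolding ein_def by blast
  qed
qed

lemma prepend:
  assumes co: "co_core EC Fs U0 cls0 eds0"
    and pr: "\<forall>i<n. \<forall>y. ein EC (fs!i) y \<longleftrightarrow> y = vs!i"
    and fF: "\<forall>i<n. fs!i \<in> Fs"
    and dist: "\<forall>i<n. \<forall>j<n. (fs!i = fs!j \<longrightarrow> i = j) \<and> (vs!i = vs!j \<longrightarrow> i = j) \<and> fs!i \<noteq> vs!j"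
    and nU0: "\<forall>i<n. fs!i \<notin> U0 \<and> vs!i \<notin> U0"
  shows "I \<subseteq> {..<n} \<Longrightarrow> co_core EC Fs (U0 \<union> (\<Union>i\<in>I. {vs!i, fs!i})) (cls0 \<union> (\<lambda>i. {vs!i, fs!i}) ` I) eds0"
proof -
  assume "I \<subseteq> {..<n}"
  hence fin: "finite I" using finite_subset by blast
  show ?thesis using fin \<open>I \<subseteq> {..<n}\<close>
  proof (induction I rule: finite_induct)
    case empty
    then show ?case using co by simp
  next
    case (insert i I)
    define U where "U = U0 \<union> (\<Union>i\<in>insert i I. {vs!i, fs!i})"
    have i: "i < n" using insert.prems by blast
    have IH: "co_core EC Fs (U0 \<union> (\<Union>i\<in>I. {vs!i, fs!i})) (cls0 \<union> (\<lambda>i. {vs!i, fs!i}) ` I) eds0"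
      using insert by blast
    have inU: "fs!i \<in> U" "vs!i \<in> U" unfolding U_def by auto
    have A: "adj (induced EC U) {fs!i} = {vs!i}"
      unfolding adj_induced using pr i inU by auto
    have A2: "adj EC {fs!i} = {vs!i}" unfolding adj_def using pr i by auto
    have sc: "self_contained (induced EC U) (Fs \<inter> U) {fs!i}"
      unfolding self_contained_def
    proof (intro conjI allI impI)
      show "{fs ! i} \<subseteq> Fs \<inter> U" using fF i inU by auto
      show "card {fs ! i} = card (adj (induced EC U) {fs ! i})" unfolding A by simp
      fix Y assume "Y \<subseteq> {fs!i}"
      hence "Y = {} \<or> Y = {fs!i}" by blast
      thus "card Y \<le> card (adj (induced EC U) Y)" using A by auto
    qed
    have nope: "\<not> (\<exists>Y. Y \<subset> {fs!i} \<and> Y \<noteq> {} \<and> self_contained (induced EC U) (Fs \<inter> U) Y)"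
    proof
      assume "\<exists>Y. Y \<subset> {fs!i} \<and> Y \<noteq> {} \<and> self_contained (induced EC U) (Fs \<inter> U) Y"
      then obtain Y where "Y \<subset> {fs!i}" "Y \<noteq> {}" by blast
      moreover have "Y = {} \<or> Y = {fs!i}" using calculation(1) subset_singletonD by blast
      ultimately show False by blast
    qed
    have msc: "min_self_contained (induced EC U) (Fs \<inter> U) {fs!i}"
      unfolding min_self_contained_def using sc nope by simp
    have diff: "U - ({fs!i} \<union> adj (induced EC U) {fs!i}) = U0 \<union> (\<Union>i\<in>I. {vs!i, fs!i})"
    proof -
      have "\<forall>j\<in>I. fs!i \<noteq> fs!j \<and> fs!i \<noteq> vs!j \<and> vs!i \<noteq> vs!j \<and> vs!i \<noteq> fs!j"
      proof
        fix j assume j: "j \<in> I"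
        hence "j < n" "j \<noteq> i" using insert.prems insert.hyps(2) by auto
        thus "fs!i \<noteq> fs!j \<and> fs!i \<noteq> vs!j \<and> vs!i \<noteq> vs!j \<and> vs!i \<noteq> fs!j"
          using dist i by metis
      qed
      hence "U - ({fs!i} \<union> {vs!i}) = U0 \<union> (\<Union>i\<in>I. {vs!i, fs!i})"
        unfolding U_def using nU0 i by auto
      thus ?thesis by (simp only: A)
    qed
    have "co_core EC Fs U (insert ({fs!i} \<union> adj (induced EC U) {fs!i}) (cls0 \<union> (\<lambda>i. {vs!i, fs!i}) ` I))
        ({(v, {fs!i} \<union> adj (induced EC U) {fs!i}) | v. v \<in> adj EC {fs!i} - adj (induced EC U) {fs!i}} \<union> eds0)"
      by (rule co_core.co_step[OF _ msc refl]) (use inU diff IH in auto)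
    moreover have "insert ({fs!i} \<union> adj (induced EC U) {fs!i}) (cls0 \<union> (\<lambda>i. {vs!i, fs!i}) ` I)
       = cls0 \<union> (\<lambda>i. {vs!i, fs!i}) ` insert i I" unfolding A by auto
    moreover have "{(v, {fs!i} \<union> adj (induced EC U) {fs!i}) | v. v \<in> adj EC {fs!i} - adj (induced EC U) {fs!i}} = {}"
      unfolding A A2 by simp
    ultimately have "co_core EC Fs U (cls0 \<union> (\<lambda>i. {vs!i, fs!i}) ` insert i I) eds0"
      by (metis sup_bot.left_neutral)
    thus ?case unfolding U_def .
  qed
qed

lemma Ed_mem: "(a,b) \<in> do_bip E fs vs \<longleftrightarrow> ((a,b) \<in> E \<and> b \<notin> set fs) \<or> (\<exists>i<length fs. a = vs!i \<and> b = fs!i)"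
  unfolding do_bip_def by auto

lemma Ed_sub: "bip V F E \<Longrightarrow> set fs \<subseteq> F \<Longrightarrow> set vs \<subseteq> V \<Longrightarrow> length fs = length vs \<Longrightarrow>
   do_bip E fs vs \<subseteq> V \<times> F"
  unfolding bip_def do_bip_def by auto

lemma ein_Ed_V:
  assumes "bip V F E" "set fs \<subseteq> F" "set vs \<subseteq> V" "length fs = length vs" "z \<in> V" "z \<notin> set vs"
  shows "ein (do_bip E fs vs) z y \<longleftrightarrow> ein E z y \<and> y \<notin> set fs"
proof -
  have VF: "V \<inter> F = {}" "E \<subseteq> V \<times> F" using assms(1) unfolding bip_def by auto
  have sub: "do_bip E fs vs \<subseteq> V \<times> F" using Ed_sub assms(1-4) by blast
  have "(y,z) \<notin> do_bip E fs vs" "(y,z) \<notin> E" using sub VF assms(5) by auto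
  moreover have "(z,y) \<in> do_bip E fs vs \<longleftrightarrow> (z,y) \<in> E \<and> y \<notin> set fs"
    unfolding Ed_mem using assms(4,6) by (auto simp: set_conv_nth)
  ultimately show ?thesis unfolding ein_def by blast
qed

lemma ein_Ed_F:
  assumes "bip V F E" "set fs \<subseteq> F" "set vs \<subseteq> V" "length fs = length vs" "f \<in> F" "f \<notin> set fs"
  shows "ein (do_bip E fs vs) f y \<longleftrightarrow> ein E f y"
proof -
  have VF: "V \<inter> F = {}" "E \<subseteq> V \<times> F" using assms(1) unfolding bip_def by auto
  have sub: "do_bip E fs vs \<subseteq> V \<times> F" using Ed_sub assms(1-4) by blast
  have "(f,y) \<notin> do_bip E fs vs" "(f,y) \<notin> E" using sub VF assms(5) by auto
  moreover have "(y,f) \<in> do_bip E fs vs \<longleftrightarrow> (y,f) \<in> E"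
    unfolding Ed_mem using assms(6) by (auto simp: set_conv_nth)
  ultimately show ?thesis unfolding ein_def by blast
qed

lemma ein_Ed_fi:
  assumes "bip V F E" "set fs \<subseteq> F" "set vs \<subseteq> V" "length fs = length vs" "distinct fs" "i < length fs"
  shows "ein (do_bip E fs vs) (fs!i) y \<longleftrightarrow> y = vs!i"
proof -
  have VF: "V \<inter> F = {}" "E \<subseteq> V \<times> F" using assms(1) unfolding bip_def by auto
  have sub: "do_bip E fs vs \<subseteq> V \<times> F" using Ed_sub assms(1-4) by blast
  have fi: "fs!i \<in> F" "fs!i \<in> set fs" using assms(2,6) by auto
  have "(fs!i,y) \<notin> do_bip E fs vs" using sub VF fi by auto
  moreover have "(y,fs!i) \<in> do_bip E fs vs \<longleftrightarrow> y = vs!i"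
    unfolding Ed_mem using assms(5,6) fi(2) by (auto simp: nth_eq_iff_index_eq)
  ultimately show ?thesis unfolding ein_def by blast
qed

lemma induced_Ed:
  assumes "T \<inter> (set fs \<union> set vs) = {}" "length fs = length vs"
  shows "induced (do_bip E fs vs) T = induced E T"
  unfolding induced_def do_bip_def using assms by (auto simp: set_conv_nth)

theorem proposition25:
  fixes V F W SF SV :: "'a set" and E :: "('a \<times> 'a) set"
    and G G' :: "'a set set \<times> ('a \<times> 'a set) set"
    and fs vs :: "'a list"
  assumes "bip V F E" and "W \<subseteq> V"
    and "is_CO V F E W G"
    and "SF \<subseteq> F" and "SV \<subseteq> V - W" and "SF \<union> SV \<in> fst G"
    and "distinct fs" and "distinct vs" and "length fs = length vs"
    and "set fs = SF" and "set vs = SV"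
    and "is_CO V F (do_bip E fs vs) W G'"
  shows "G' = do_CO G fs vs"
proof -
  let ?V' = "V - W"
  let ?E1 = "induced E (?V' \<union> F)"
  let ?Ed = "do_bip E fs vs"
  let ?E2 = "induced ?Ed (?V' \<union> F)"
  let ?S = "SF \<union> SV"
  let ?n = "length fs"
  note bd = bipD[OF assms(1)]
  have SVV': "SV \<subseteq> ?V'" using assms(5) .
  have fsF: "set fs \<subseteq> F" and vsV: "set vs \<subseteq> V" using assms(4,5,10,11) by auto
  have bip2: "bip V F ?Ed" unfolding bip_def using bd Ed_sub[OF assms(1) fsF vsV assms(9)] by blast
  obtain M TI TO TC clsC edsC where
    mm1: "max_matching ?E1 M" and TIdef: "TI = alt_reach ?V' F ?E1 M ?V'"
    and TOdef: "TO = alt_reach ?V' F ?E1 M F"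
    and TCdef: "TC = (?V' \<union> F) - (TI \<union> TO)" and co1: "co_core (induced E TC) F TC clsC edsC"
    and fG: "fst G = clsC \<union> components E TI \<union> components E TO \<union> {{w} | w. w \<in> W}"
    and sG: "snd G = edsC
         \<union> {(v, C) | v f C. (v, f) \<in> E \<and> C \<in> fst G \<and> f \<in> C \<and>
               ((v \<in> (TO \<union> TC) \<inter> V \<and> f \<in> TI \<inter> F) \<or> (v \<in> TO \<inter> V \<and> f \<in> TC \<inter> F))}
         \<union> {(w, C) | w f C. w \<in> W \<and> f \<in> adj E {w} \<and> C \<in> fst G \<and> f \<in> C}"
    using assms(3) unfolding is_CO_def Let_def apply (elim exE conjE) apply (rule that) by assumption+
  obtain M2 TI2 TO2 TC2 clsC2 edsC2 where
    mm2: "max_matching ?E2 M2" and TI2def: "TI2 = alt_reach ?V' F ?E2 M2 ?V'"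
    and TO2def: "TO2 = alt_reach ?V' F ?E2 M2 F"
    and TC2def: "TC2 = (?V' \<union> F) - (TI2 \<union> TO2)" and co2': "co_core (induced ?Ed TC2) F TC2 clsC2 edsC2"
    and fG': "fst G' = clsC2 \<union> components ?Ed TI2 \<union> components ?Ed TO2 \<union> {{w} | w. w \<in> W}"
    and sG': "snd G' = edsC2
         \<union> {(v, C) | v f C. (v, f) \<in> ?Ed \<and> C \<in> fst G' \<and> f \<in> C \<and>
               ((v \<in> (TO2 \<union> TC2) \<inter> V \<and> f \<in> TI2 \<inter> F) \<or> (v \<in> TO2 \<inter> V \<and> f \<in> TC2 \<inter> F))}
         \<union> {(w, C) | w f C. w \<in> W \<and> f \<in> adj ?Ed {w} \<and> C \<in> fst G' \<and> f \<in> C}"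
    using assms(12) unfolding is_CO_def Let_def apply (elim exE conjE) apply (rule that) by assumption+
  interpret I1: bipg ?V' F ?E1 M using bipg_I[OF assms(1) mm1] .
  interpret O1: bipg F ?V' "?E1\<inverse>" "M\<inverse>" using bipg_O[OF assms(1) mm1] .
  interpret I2: bipg ?V' F ?E2 M2 using bipg_I[OF bip2 mm2] .
  interpret O2: bipg F ?V' "?E2\<inverse>" "M2\<inverse>" using bipg_O[OF bip2 mm2] .
  have TI1: "TI = I1.X \<union> adj ?E1 I1.X" using I1.R_eq TIdef unfolding I1.R_def by simp
  have TO1: "TO = O1.X \<union> adj ?E1 O1.X"
    using O1.R_eq TOdef unfolding O1.R_def alt_reach_conv[of ?V' F ?E1 M F] by simp
  have TI2': "TI2 = I2.X \<union> adj ?E2 I2.X" using I2.R_eq TI2def unfolding I2.R_def by simp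
  have TO2': "TO2 = O2.X \<union> adj ?E2 O2.X"
    using O2.R_eq TO2def unfolding O2.R_def alt_reach_conv[of ?V' F ?E2 M2 F] by simp
  have cSF: "card SF = ?n" using distinct_card[OF assms(7)] assms(10) by simp
  have cSV: "card SV = ?n" using distinct_card[OF assms(8)] assms(11) assms(9) by simp
  have SV': "?S \<inter> ?V' = SV" using assms(4,5) bd(3) by blast
  have SF': "?S \<inter> F = SF" using assms(4,5) bd(3) by blast
  have finSF: "finite SF" "finite SV" using assms(10,11) by auto
  have EE1: "\<forall>a b. ein ?E1 a b \<longrightarrow> ein E a b" unfolding ein_def induced_def by blast
  have EE1': "\<forall>a b. ein (?E1\<inverse>) a b \<longrightarrow> ein E a b" using EE1 by simp
  have notI: "?S \<notin> components E TI"
  proof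
    assume "?S \<in> components E TI"
    hence "card (?S \<inter> F) < card (?S \<inter> ?V')" using I1.comps[OF EE1] TIdef unfolding I1.R_def by simp
    thus False using SV' SF' cSF cSV by simp
  qed
  have notO: "?S \<notin> components E TO"
  proof
    assume "?S \<in> components E TO"
    hence "card (?S \<inter> ?V') < card (?S \<inter> F)" using O1.comps[OF EE1'] TOdef
      unfolding O1.R_def alt_reach_conv[of ?V' F ?E1 M F] by simp
    thus False using SV' SF' cSF cSV by simp
  qed
  have cS: "card ?S = ?n + ?n"
  proof -
    have "SF \<inter> SV = {}" using assms(4,5) bd(3) by blast
    thus ?thesis using card_Un_disjoint[OF finSF] cSF cSV by simp
  qed
  have notW: "?S \<notin> {{w} | w. w \<in> W}"
  proof
    assume "?S \<in> {{w} | w. w \<in> W}"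
    then obtain w where "?S = {w}" by blast
    hence "card ?S = 1" by simp
    thus False using cS by presburger
  qed
  have "?S \<in> clsC \<union> components E TI \<union> components E TO \<union> {{w} | w. w \<in> W}"
    using assms(6) unfolding fG .
  hence "?S \<in> clsC \<or> ?S \<in> components E TI \<or> ?S \<in> components E TO \<or> ?S \<in> {{w} | w. w \<in> W}"
    by (simp only: Un_iff disj_assoc)
  hence Sin: "?S \<in> clsC"
  proof (elim disjE)
    assume "?S \<in> components E TI" thus ?thesis by (rule notE[OF notI])
  next
    assume "?S \<in> components E TO" thus ?thesis by (rule notE[OF notO])
  next
    assume "?S \<in> {{w} | w. w \<in> W}" thus ?thesis by (rule notE[OF notW])
  qed
  have "induced E TC \<subseteq> V \<times> F" unfolding induced_def using bd(4) by auto
  then interpret C1: cob "induced E TC" F V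
    unfolding cob_def using bd(3) by simp
  note cl1 = C1.co_clusters[OF co1]
  have cl1a: "\<forall>T\<in>clsC. T \<noteq> {} \<and> T \<subseteq> TC" using cl1 by (rule conjunct1)
  have cl1c: "\<forall>T1\<in>clsC. \<forall>T2\<in>clsC. T1 \<inter> T2 \<noteq> {} \<longrightarrow> T1 = T2" using cl1 by simp
  have STC: "?S \<subseteq> TC" using bspec[OF cl1a Sin] by (rule conjunct2)
  have finTC: "finite TC" using TCdef bd by auto
  have TCdisj: "TC \<inter> TI = {}" "TC \<inter> TO = {}" using TCdef by auto

  have pm1: "\<forall>x\<in>TC. \<exists>y\<in>TC. ein M x y" using PM_TC[OF assms(1) mm1] TIdef TOdef TCdef by simp
  have VF': "?V' \<inter> F = {}" using bd(3) by blast
  have pu1: "\<forall>x y z. ein M x y \<longrightarrow> ein M x z \<longrightarrow> y = z"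
    using partner_unique[OF I1.Mm E1_sub[OF assms(1)] VF'] .
  have me1: "\<forall>x y. ein M x y \<longrightarrow> x \<in> TC \<longrightarrow> y \<in> TC \<longrightarrow> ein (induced E TC) x y"
    using I1.MEg unfolding ein_def induced_def by blast
  have pmS: "\<forall>x\<in>?S. \<exists>y\<in>?S. ein M x y" using C1.co_pm[OF co1 finTC pu1 me1 pm1] Sin by (rule bspec)
  have SFm: "\<forall>f\<in>SF. \<exists>v\<in>SV. (v,f) \<in> M"
  proof
    fix f assume f: "f \<in> SF"
    then obtain y where y: "y \<in> ?S" "ein M f y" using pmS by blast
    have fF: "f \<in> F" using f assms(4) by blast
    have "(f,y) \<notin> M" using I1.mPQ[OF I1.Mm] fF VF' by blast
    hence "(y,f) \<in> M" using y(2) unfolding ein_def by blast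
    hence "y \<in> ?V'" using I1.mPQ[OF I1.Mm] by blast
    hence "y \<in> SV" using y(1) SV' by blast
    thus "\<exists>v\<in>SV. (v,f) \<in> M" using \<open>(y,f) \<in> M\<close> by blast
  qed
  have SVm: "\<forall>v\<in>SV. \<exists>f\<in>SF. (v,f) \<in> M"
  proof
    fix v assume v: "v \<in> SV"
    then obtain y where y: "y \<in> ?S" "ein M v y" using pmS by blast
    have vV: "v \<in> ?V'" using v assms(5) by blast
    have "(y,v) \<notin> M" using I1.mPQ[OF I1.Mm] vV VF' by blast
    hence "(v,y) \<in> M" using y(2) unfolding ein_def by blast
    hence "y \<in> F" using I1.mPQ[OF I1.Mm] by blast
    hence "y \<in> SF" using y(1) SF' by blast
    thus "\<exists>f\<in>SF. (v,f) \<in> M" using \<open>(v,y) \<in> M\<close> by blast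
  qed
  define Mdo where "Mdo = {e\<in>M. snd e \<notin> SF} \<union> (\<lambda>i. (vs!i, fs!i)) ` {..<?n}"
  have nth_fs: "fs!i \<in> SF" "vs!i \<in> SV" if "i < ?n" for i using that assms(9,10,11) by auto
  have Ed_new: "(vs!i, fs!i) \<in> ?Ed" if "i < ?n" for i using that unfolding Ed_mem by blast
  have mMdo: "matching ?E2 Mdo"
    unfolding matching_alt
  proof (rule conjI)
    show "Mdo \<subseteq> ?E2"
    proof
      fix e assume "e \<in> Mdo"
      then consider "e \<in> M" "snd e \<notin> SF" | i where "i < ?n" "e = (vs!i, fs!i)" unfolding Mdo_def by blast
      thus "e \<in> ?E2"
      proof cases
        case 1
        obtain a b where e: "e = (a,b)" by force
        have "(a,b) \<in> ?E1" using 1 I1.MEg e by blast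
        hence "(a,b) \<in> E" "a \<in> ?V' \<union> F" "b \<in> ?V' \<union> F" unfolding induced_def by auto
        moreover have "(a,b) \<in> ?Ed" unfolding Ed_mem using calculation(1) 1(2) e assms(10) by simp
        ultimately show ?thesis unfolding induced_def e by blast
      next
        case 2
        have "vs!i \<in> ?V'" "fs!i \<in> F" using nth_fs[OF 2(1)] assms(4,5) by blast+
        thus ?thesis using Ed_new[OF 2(1)] 2(2) unfolding induced_def by blast
      qed
    qed
  next
    show "\<forall>a b c d. (a,b) \<in> Mdo \<longrightarrow> (c,d) \<in> Mdo \<longrightarrow> (a = c \<or> b = d) \<longrightarrow> a = c \<and> b = d"
    proof (intro allI impI)
    fix a b c d assume h: "(a,b) \<in> Mdo" "(c,d) \<in> Mdo" "a = c \<or> b = d"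
    have mM: "\<And>a b c d. (a,b) \<in> M \<Longrightarrow> (c,d) \<in> M \<Longrightarrow> a = c \<or> b = d \<Longrightarrow> a = c \<and> b = d"
      using I1.Mm unfolding matching_alt by blast
    have old_new: False if o: "(a',b') \<in> M" "b' \<notin> SF" "i < ?n" "a' = vs!i \<or> b' = fs!i" for a' b' i
    proof -
      have "b' \<noteq> fs!i" using o(2) nth_fs[OF o(3)] by blast
      hence "a' = vs!i" using o(4) by blast
      then obtain f where "f \<in> SF" "(a',f) \<in> M" using SVm nth_fs[OF o(3)] by blast
      hence "b' = f" using mM[OF o(1)] by blast
      thus False using o(2) \<open>f \<in> SF\<close> by blast
    qed
    have new_new: "i = j" if "i < ?n" "j < ?n" "vs!i = vs!j \<or> fs!i = fs!j" for i j
      using that assms(7,8,9) nth_eq_iff_index_eq by metis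
    show "a = c \<and> b = d"
    proof (cases "(a,b) \<in> M \<and> b \<notin> SF")
      case T1: True
      show ?thesis
      proof (cases "(c,d) \<in> M \<and> d \<notin> SF")
        case True thus ?thesis using T1 mM h(3) by blast
      next
        case False
        then obtain j where "j < ?n" "(c,d) = (vs!j, fs!j)" using h(2) unfolding Mdo_def by auto
        thus ?thesis using old_new[of a b j] T1 h(3) by auto
      qed
    next
      case F1: False
      then obtain i where i: "i < ?n" "(a,b) = (vs!i, fs!i)" using h(1) unfolding Mdo_def by auto
      show ?thesis
      proof (cases "(c,d) \<in> M \<and> d \<notin> SF")
        case True thus ?thesis using old_new[of c d i] i h(3) by auto
      next
        case False
        then obtain j where j: "j < ?n" "(c,d) = (vs!j, fs!j)" using h(2) unfolding Mdo_def by auto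
        have "i = j" using new_new[OF i(1) j(1)] i j h(3) by auto
        thus ?thesis using i j by auto
      qed
    qed
    qed
  qed
  have cMdo: "card Mdo = card M"
  proof -
    have finM: "finite M" using I1.finM .
    have c1: "card {e\<in>M. snd e \<in> SF} = ?n"
    proof -
      have "inj_on snd {e\<in>M. snd e \<in> SF}" using I1.Mm unfolding matching_def inj_on_def by blast
      moreover have "snd ` {e\<in>M. snd e \<in> SF} = SF"
      proof
        show "SF \<subseteq> snd ` {e\<in>M. snd e \<in> SF}"
        proof
          fix f assume "f \<in> SF"
          then obtain v where "(v,f) \<in> M" using SFm by blast
          thus "f \<in> snd ` {e\<in>M. snd e \<in> SF}" using \<open>f \<in> SF\<close> by force
        qed
      qed blast
      ultimately show ?thesis using card_image cSF by metis
    qed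
    have c2: "card M = card {e\<in>M. snd e \<notin> SF} + card {e\<in>M. snd e \<in> SF}"
    proof -
      have "M = {e\<in>M. snd e \<notin> SF} \<union> {e\<in>M. snd e \<in> SF}" by blast
      moreover have "card ({e\<in>M. snd e \<notin> SF} \<union> {e\<in>M. snd e \<in> SF}) =
          card {e\<in>M. snd e \<notin> SF} + card {e\<in>M. snd e \<in> SF}"
        by (rule card_Un_disjoint) (use finM in auto)
      ultimately show ?thesis by simp
    qed
    have c3: "card ((\<lambda>i. (vs!i, fs!i)) ` {..<?n}) = ?n"
    proof -
      have "inj_on (\<lambda>i. (vs!i, fs!i)) {..<?n}"
        unfolding inj_on_def using assms(7) nth_eq_iff_index_eq by fastforce
      thus ?thesis by (simp add: card_image)
    qed
    have c4: "card Mdo = card {e\<in>M. snd e \<notin> SF} + card ((\<lambda>i. (vs!i, fs!i)) ` {..<?n})"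
      unfolding Mdo_def
    proof (rule card_Un_disjoint)
      show "finite {e\<in>M. snd e \<notin> SF}" using finM by simp
      show "finite ((\<lambda>i. (vs!i, fs!i)) ` {..<?n})" by simp
      show "{e\<in>M. snd e \<notin> SF} \<inter> (\<lambda>i. (vs!i, fs!i)) ` {..<?n} = {}" using nth_fs by force
    qed
    show ?thesis using c1 c2 c3 c4 by linarith
  qed
  have c2ge: "card M \<le> card M2" using mm2 mMdo cMdo unfolding max_matching_def by metis

  have adjV: "adj ?E2 Z = adj ?E1 Z - SF" if "Z \<subseteq> ?V'" "Z \<inter> SV = {}" for Z
  proof -
    have "\<forall>x\<in>Z. \<forall>y. ein ?Ed x y \<longleftrightarrow> ein E x y \<and> y \<notin> SF"
    proof (intro ballI allI)
      fix x y assume "x \<in> Z"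
      hence "x \<in> V" "x \<notin> set vs" using that assms(11) by auto
      thus "ein ?Ed x y \<longleftrightarrow> ein E x y \<and> y \<notin> SF"
        using ein_Ed_V[OF assms(1) fsF vsV assms(9)] assms(10) by blast
    qed
    thus ?thesis unfolding adj_induced by blast
  qed
  have adjF: "adj ?E2 Z = adj ?E1 Z" if "Z \<subseteq> F" "Z \<inter> SF = {}" for Z
  proof -
    have "\<forall>x\<in>Z. \<forall>y. ein ?Ed x y \<longleftrightarrow> ein E x y"
    proof (intro ballI allI)
      fix x y assume "x \<in> Z"
      hence "x \<in> F" "x \<notin> set fs" using that assms(10) by auto
      thus "ein ?Ed x y \<longleftrightarrow> ein E x y"
        using ein_Ed_F[OF assms(1) fsF vsV assms(9)] by blast
    qed
    thus ?thesis unfolding adj_induced by blast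
  qed
  have XI_S: "I1.X \<inter> SV = {}" using TI1 STC TCdisj by blast
  have aXI_S: "adj ?E1 I1.X \<inter> SF = {}" using TI1 STC TCdisj by blast
  have aXI: "adj ?E2 I1.X = adj ?E1 I1.X" using adjV[OF I1.X_P XI_S] aXI_S by blast
  have "card M2 + card I1.X \<le> card (adj ?E1 I1.X) + card ?V'" using I2.weak[OF I2.Mm I1.X_P] unfolding aXI .
  hence c2le: "card M2 \<le> card M" using I1.T4 by linarith
  have c2: "card M2 = card M" using c2ge c2le by simp
  have "card M2 + card I1.X = card (adj ?E2 I1.X) + card ?V'" using aXI I1.T4 c2 by simp
  hence X21: "I2.X \<subseteq> I1.X" using I2.T5[OF I1.X_P] by blast
  have XI2_S: "I2.X \<inter> SV = {}" using X21 XI_S by blast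
  have "adj ?E1 I2.X \<subseteq> adj ?E1 I1.X" using adj_mono[OF X21] .
  hence aXI2: "adj ?E2 I2.X = adj ?E1 I2.X" using adjV[OF I2.X_P XI2_S] aXI_S by blast
  have "card M + card I2.X = card (adj ?E1 I2.X) + card ?V'" using I2.T4 aXI2 c2 by simp
  hence "I1.X \<subseteq> I2.X" using I1.T5[OF I2.X_P] by blast
  hence XIeq: "I2.X = I1.X" using X21 by blast
  have TIeq: "TI2 = TI" using TI2' TI1 XIeq aXI by simp
  have XO_S: "O1.X \<inter> SF = {}" using TO1 STC TCdisj by blast
  have OXF: "O1.X \<subseteq> F" using O1.X_P .
  have aXO: "adj ?E2 O1.X = adj ?E1 O1.X" using adjF[OF OXF XO_S] .
  have "card (M2\<inverse>) + card O1.X = card (adj (?E2\<inverse>) O1.X) + card F"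
    using O1.T4 aXO c2 by (simp add: card_conv)
  hence XO21: "O2.X \<subseteq> O1.X" using O2.T5[OF O1.X_P] by blast
  have XO2_S: "O2.X \<inter> SF = {}" using XO21 XO_S by blast
  have aXO2: "adj ?E2 O2.X = adj ?E1 O2.X" using adjF[OF O2.X_P XO2_S] .
  have "card (M\<inverse>) + card O2.X = card (adj (?E1\<inverse>) O2.X) + card F"
    using O2.T4 aXO2 c2 by (simp add: card_conv)
  hence "O1.X \<subseteq> O2.X" using O1.T5[OF O2.X_P] by blast
  hence XOeq: "O2.X = O1.X" using XO21 by blast
  have TOeq: "TO2 = TO" using TO2' TO1 XOeq aXO by simp
  have TCeq: "TC2 = TC" using TC2def TCdef TIeq TOeq by simp

  have co2: "co_core (induced ?Ed TC) F TC clsC2 edsC2" using co2' TCeq by simp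
  have EdVF: "?Ed \<subseteq> V \<times> F" using Ed_sub[OF assms(1) fsF vsV assms(9)] .
  have "induced ?Ed TC \<subseteq> V \<times> F" unfolding induced_def using EdVF by auto
  then interpret C2: cob "induced ?Ed TC" F V
    unfolding cob_def using bd(3) by simp
  have pm2: "\<forall>x\<in>TC. \<exists>y\<in>TC. ein M2 x y" using PM_TC[OF bip2 mm2] TI2def TO2def TC2def TCeq by simp
  have pu2: "\<forall>x y z. ein M2 x y \<longrightarrow> ein M2 x z \<longrightarrow> y = z"
    using partner_unique[OF I2.Mm E1_sub[OF bip2] VF'] .
  have me2: "\<forall>x y. ein M2 x y \<longrightarrow> x \<in> TC \<longrightarrow> y \<in> TC \<longrightarrow> ein (induced ?Ed TC) x y"
    using I2.MEg unfolding ein_def induced_def by blast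
  have hall: "C2.Hall TC" using C2.Hall_pm[OF finTC pu2 me2 pm2] .
  have r1: "co_core (induced E TC) F (TC - ?S) (clsC - {?S}) {x \<in> edsC. snd x \<noteq> ?S}"
    using C1.co_remove[OF co1 Sin] .
  have "\<forall>x\<in>F \<inter> (TC - ?S). \<forall>y. ein (induced E TC) x y = ein (induced ?Ed TC) x y"
  proof (intro ballI allI)
    fix x y assume x: "x \<in> F \<inter> (TC - ?S)"
    hence "x \<in> F" "x \<notin> set fs" using assms(10) by auto
    hence "ein ?Ed x y = ein E x y" using ein_Ed_F[OF assms(1) fsF vsV assms(9)] by blast
    thus "ein (induced E TC) x y = ein (induced ?Ed TC) x y" unfolding ein_induced by simp
  qed
  hence r2: "co_core (induced ?Ed TC) F (TC - ?S) (clsC - {?S}) {x \<in> edsC. snd x \<noteq> ?S}"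
    using co_transfer[OF r1] by blast
  have pr: "\<forall>i<?n. \<forall>y. ein (induced ?Ed TC) (fs!i) y \<longleftrightarrow> y = vs!i"
  proof (intro allI impI)
    fix i y assume i: "i < ?n"
    have "fs!i \<in> TC" "vs!i \<in> TC" using nth_fs[OF i] STC by auto
    thus "ein (induced ?Ed TC) (fs!i) y \<longleftrightarrow> y = vs!i"
      unfolding ein_induced using ein_Ed_fi[OF assms(1) fsF vsV assms(9,7) i] by blast
  qed
  have fF: "\<forall>i<?n. fs!i \<in> F" using nth_fs assms(4) by blast
  have dist: "\<forall>i<?n. \<forall>j<?n. (fs!i = fs!j \<longrightarrow> i = j) \<and> (vs!i = vs!j \<longrightarrow> i = j) \<and> fs!i \<noteq> vs!j"
  proof (intro allI impI conjI)
    fix i j assume ij: "i < ?n" "j < ?n"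
    show "fs!i = fs!j \<Longrightarrow> i = j" using nth_eq_iff_index_eq[OF assms(7) ij] by blast
    have ij': "i < length vs" "j < length vs" using ij assms(9) by auto
    show "vs!i = vs!j \<Longrightarrow> i = j" using nth_eq_iff_index_eq[OF assms(8) ij'] by blast
    have "fs!i \<in> F" using nth_fs(1)[OF ij(1)] assms(4) by (rule subsetD[rotated])
    moreover have "vs!j \<in> V - W" using nth_fs(2)[OF ij(2)] assms(5) by (rule subsetD[rotated])
    ultimately show "fs!i \<noteq> vs!j" using bd(3) by (metis DiffD1 disjoint_iff)
  qed
  have nU0: "\<forall>i<?n. fs!i \<notin> TC - ?S \<and> vs!i \<notin> TC - ?S" using nth_fs by blast
  have r3: "co_core (induced ?Ed TC) F ((TC - ?S) \<union> (\<Union>i\<in>{..<?n}. {vs!i, fs!i}))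
      ((clsC - {?S}) \<union> (\<lambda>i. {vs!i, fs!i}) ` {..<?n}) {x \<in> edsC. snd x \<noteq> ?S}"
    using prepend[OF r2 pr fF dist nU0] by blast
  have US: "(\<Union>i\<in>{..<?n}. {vs!i, fs!i}) = ?S"
    using assms(9,10,11) by (auto simp: set_conv_nth)
  have r4: "co_core (induced ?Ed TC) F TC
      ((clsC - {?S}) \<union> (\<lambda>i. {vs!i, fs!i}) ` {..<?n}) {x \<in> edsC. snd x \<noteq> ?S}"
  proof -
    have "(TC - ?S) \<union> (\<Union>i\<in>{..<?n}. {vs!i, fs!i}) = TC" using US STC by blast
    thus ?thesis using r3 by simp
  qed
  have cls2: "clsC2 = (clsC - {?S}) \<union> (\<lambda>i. {vs!i, fs!i}) ` {..<?n}"
    and eds2: "edsC2 = {x \<in> edsC. snd x \<noteq> ?S}"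
    using C2.co_uniq[OF co2 finTC hall r4] by auto

  let ?P = "(\<lambda>i. {vs!i, fs!i}) ` {..<?n}"
  have comp_sub: "\<And>C Eg U. C \<in> components Eg U \<Longrightarrow> C \<subseteq> U" unfolding components_def by blast
  have STI: "?S \<inter> TI = {}" and STO: "?S \<inter> TO = {}" using STC TCdisj by auto
  have WVF: "W \<inter> (?V' \<union> F) = {}" using assms(2) bd(3) by blast
  have TCsub: "TC \<subseteq> ?V' \<union> F" using TCdef by blast
  have K1: "C = ?S" if C: "C \<in> fst G" "x \<in> ?S" "x \<in> C" for C x
  proof -
    have "C \<in> clsC \<union> components E TI \<union> components E TO \<union> {{w} | w. w \<in> W}"
      using C(1) unfolding fG .
    hence "C \<in> clsC \<or> C \<in> components E TI \<or> C \<in> components E TO \<or> C \<in> {{w} | w. w \<in> W}"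
      by (simp only: Un_iff disj_assoc)
    thus ?thesis
    proof (elim disjE)
      assume CC: "C \<in> clsC"
      have "C \<inter> ?S \<noteq> {}" using C(2,3) by blast
      thus ?thesis using cl1c[rule_format, OF CC Sin] by simp
    next
      assume "C \<in> components E TI"
      hence "C \<subseteq> TI" by (rule comp_sub)
      hence False using C(2,3) STI by blast
      thus ?thesis ..
    next
      assume "C \<in> components E TO"
      hence "C \<subseteq> TO" by (rule comp_sub)
      hence False using C(2,3) STO by blast
      thus ?thesis ..
    next
      assume "C \<in> {{w} | w. w \<in> W}"
      then obtain w where "w \<in> W" "C = {w}" by blast
      moreover have "x \<in> ?V' \<union> F" using C(2) STC TCsub by blast
      ultimately have False using C(3) WVF by blast
      thus ?thesis ..
    qed
  qed
  have setS: "set fs \<union> set vs = ?S" using assms(10,11) by simp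
  have iI: "induced ?Ed TI = induced E TI"
    by (rule induced_Ed[OF _ assms(9)]) (use STI setS in blast)
  have iO: "induced ?Ed TO = induced E TO"
    by (rule induced_Ed[OF _ assms(9)]) (use STO setS in blast)
  have cI: "components ?Ed TI = components E TI" unfolding components_def iI ..
  have cO: "components ?Ed TO = components E TO" unfolding components_def iO ..
  have fG'eq: "fst G' = (fst G - {?S}) \<union> ?P"
  proof -
    have "fst G' = ((clsC - {?S}) \<union> ?P) \<union> components E TI \<union> components E TO \<union> {{w} | w. w \<in> W}"
      using fG' unfolding TIeq TOeq cls2 cI cO .
    moreover have "fst G - {?S} = (clsC - {?S}) \<union> components E TI \<union> components E TO \<union> {{w} | w. w \<in> W}"
      unfolding fG using notI notO notW by auto
    ultimately show ?thesis by auto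
  qed
  have Psub: "C \<subseteq> ?S" if "C \<in> ?P" for C using that US by blast
  have pairs: "{{vs ! i, fs ! i} | i. i < length fs} = ?P" by auto
  have fst_ok: "fst G' = fst (do_CO G fs vs)"
    unfolding do_CO_def fst_conv setS pairs using fG'eq .
  have memb: "\<And>a c P. (a,c) \<in> {(v, C) | v f C. P v f C} \<longleftrightarrow> (\<exists>f. P a f c)" by blast
  have inG': "C \<in> fst G' \<and> f \<in> C \<longleftrightarrow> C \<in> fst G \<and> f \<in> C" if "f \<notin> ?S" for C f
    using fG'eq Psub that by blast
  have SFS: "f \<in> F \<Longrightarrow> f \<in> ?S \<longleftrightarrow> f \<in> SF" for f using SF' by blast
  note sG'' = sG'[unfolded TIeq TOeq TCeq]
  have part2: "(\<exists>f. (a, f) \<in> ?Ed \<and> C \<in> fst G' \<and> f \<in> C \<and>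
               ((a \<in> (TO \<union> TC) \<inter> V \<and> f \<in> TI \<inter> F) \<or> (a \<in> TO \<inter> V \<and> f \<in> TC \<inter> F)))
     \<longleftrightarrow> (\<exists>f. (a, f) \<in> E \<and> C \<in> fst G \<and> f \<in> C \<and>
               ((a \<in> (TO \<union> TC) \<inter> V \<and> f \<in> TI \<inter> F) \<or> (a \<in> TO \<inter> V \<and> f \<in> TC \<inter> F))) \<and> C \<noteq> ?S"
    (is "(\<exists>f. ?L f) \<longleftrightarrow> (\<exists>f. ?R f) \<and> _") for a C
  proof
    assume "\<exists>f. ?L f"
    then obtain f where f: "?L f" by blast
    have fF: "f \<in> F" using f by blast
    have fnSF: "f \<notin> SF"
    proof
      assume fS: "f \<in> SF"
      hence "(a,f) \<in> E \<and> f \<notin> set fs \<or> (\<exists>i<length fs. a = vs!i \<and> f = fs!i)" using f Ed_mem by metis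
      then obtain i where i: "i < ?n" "a = vs!i" using fS assms(10) by blast
      hence "a \<in> TC" using nth_fs[OF i(1)] STC by blast
      moreover have "f \<in> TC" using fS STC by blast
      ultimately show False using f TCdisj by blast
    qed
    hence fnS: "f \<notin> ?S" using SFS fF by blast
    have "(a,f) \<in> E" using f fnSF Ed_mem[of a f E fs vs] assms(10) nth_fs by metis
    moreover have "C \<in> fst G" "f \<in> C" using inG'[OF fnS] f by blast+
    ultimately have "?R f" using f by blast
    moreover have "C \<noteq> ?S" using fnS \<open>f \<in> C\<close> by blast
    ultimately show "(\<exists>f. ?R f) \<and> C \<noteq> ?S" by blast
  next
    assume "(\<exists>f. ?R f) \<and> C \<noteq> ?S"
    then obtain f where f: "?R f" and CS: "C \<noteq> ?S" by blast
    have fnS: "f \<notin> ?S" using K1[of C f] f CS by blast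
    have fF: "f \<in> F" using f by blast
    hence "f \<notin> SF" using fnS by blast
    hence "(a,f) \<in> ?Ed" using f Ed_mem assms(10) by metis
    moreover have "C \<in> fst G'" using inG'[OF fnS] f by blast
    ultimately have "?L f" using f by blast
    thus "\<exists>f. ?L f" by blast
  qed
  have part3: "(\<exists>f. a \<in> W \<and> f \<in> adj ?Ed {a} \<and> C \<in> fst G' \<and> f \<in> C)
     \<longleftrightarrow> (\<exists>f. a \<in> W \<and> f \<in> adj E {a} \<and> C \<in> fst G \<and> f \<in> C) \<and> C \<noteq> ?S" for a C
  proof (cases "a \<in> W")
    case False thus ?thesis by blast
  next
    case True
    have aV: "a \<in> V" "a \<notin> set vs" using True assms(2,5,11) by auto
    have adjEd: "adj ?Ed {a} = adj E {a} - SF"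
      unfolding adj_def using ein_Ed_V[OF assms(1) fsF vsV assms(9) aV] assms(10) by auto
    have adjF': "adj E {a} \<subseteq> F"
      unfolding adj_def ein_def using bd(3,4) aV(1) by blast
    show ?thesis
    proof
      assume "\<exists>f. a \<in> W \<and> f \<in> adj ?Ed {a} \<and> C \<in> fst G' \<and> f \<in> C"
      then obtain f where f: "f \<in> adj E {a}" "f \<notin> SF" "C \<in> fst G'" "f \<in> C" unfolding adjEd by blast
      have fnS: "f \<notin> ?S" using f(1,2) adjF' SFS by blast
      have "C \<in> fst G" using inG'[OF fnS] f by blast
      moreover have "C \<noteq> ?S" using fnS f(4) by blast
      ultimately show "(\<exists>f. a \<in> W \<and> f \<in> adj E {a} \<and> C \<in> fst G \<and> f \<in> C) \<and> C \<noteq> ?S"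
        using f True by blast
    next
      assume "(\<exists>f. a \<in> W \<and> f \<in> adj E {a} \<and> C \<in> fst G \<and> f \<in> C) \<and> C \<noteq> ?S"
      then obtain f where f: "f \<in> adj E {a}" "C \<in> fst G" "f \<in> C" and CS: "C \<noteq> ?S" by blast
      have fnS: "f \<notin> ?S" using K1[of C f] f CS by blast
      hence "f \<in> adj ?Ed {a}" unfolding adjEd using f(1) by blast
      moreover have "C \<in> fst G'" using inG'[OF fnS] f by blast
      ultimately show "\<exists>f. a \<in> W \<and> f \<in> adj ?Ed {a} \<and> C \<in> fst G' \<and> f \<in> C" using f True by blast
    qed
  qed
  have snd_ok: "snd G' = snd (do_CO G fs vs)"
  proof -
    have "(a,C) \<in> snd G' \<longleftrightarrow> (a,C) \<in> snd G \<and> C \<noteq> ?S" for a C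
    proof -
      have "(a,C) \<in> snd G' \<longleftrightarrow> (a,C) \<in> edsC2 \<or>
          (\<exists>f. (a, f) \<in> ?Ed \<and> C \<in> fst G' \<and> f \<in> C \<and>
               ((a \<in> (TO \<union> TC) \<inter> V \<and> f \<in> TI \<inter> F) \<or> (a \<in> TO \<inter> V \<and> f \<in> TC \<inter> F))) \<or>
          (\<exists>f. a \<in> W \<and> f \<in> adj ?Ed {a} \<and> C \<in> fst G' \<and> f \<in> C)"
        unfolding sG'' Un_iff memb disj_assoc by (rule refl)
      moreover have "(a,C) \<in> snd G \<longleftrightarrow> (a,C) \<in> edsC \<or>
          (\<exists>f. (a, f) \<in> E \<and> C \<in> fst G \<and> f \<in> C \<and>
               ((a \<in> (TO \<union> TC) \<inter> V \<and> f \<in> TI \<inter> F) \<or> (a \<in> TO \<inter> V \<and> f \<in> TC \<inter> F))) \<or>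
          (\<exists>f. a \<in> W \<and> f \<in> adj E {a} \<and> C \<in> fst G \<and> f \<in> C)"
        unfolding sG Un_iff memb disj_assoc by (rule refl)
      moreover have "(a,C) \<in> edsC2 \<longleftrightarrow> (a,C) \<in> edsC \<and> C \<noteq> ?S" unfolding eds2 by simp
      ultimately show ?thesis unfolding part2 part3 by blast
    qed
    thus ?thesis unfolding do_CO_def snd_conv setS by auto
  qed
  show ?thesis using fst_ok snd_ok by (rule prod_eqI)
qed

end
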